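(* Let $n\ge2$, let $(\mathbb{R}^n,\mathfrak{g})$ be an asymptotically Euclidean manifold and $b\in L^1(\mathbb{R}_+)$, and assume hypothesis (H) with $\lambda$, $\phi$. Let $\varphi$ be the solution of $\varphi''-\lambda^2\tilde m^2(t)\varphi=0$ on $[0,\infty)$ given in the context, set $\psi(t,x)=\varphi(t)\phi(x)$, fix $R_1>0$, and let $D(t)=\{x:\int_0^{|x|}K(\tau)d\tau\le\eta(t)+R_1\}$. Then for every $q\ge1$, $$\int_{D(t)}\psi^q(t,x)\,dv_{\mathfrak{g}}\lesssim(t+1)^{\,n-1-\frac{n-1}{2}q},\qquad t\ge0,$$ with implicit constant independent of $t$.
   Context: Asymptotically Euclidean: $\mathfrak{g}=\mathfrak{g}_1+\mathfrak{g}_2$ with, in polar coordinates $x=r\omega$, $\mathfrak{g}_1=K^2(r)dr^2+r^2d\omega^2$, $|\partial_r^k(K-1)|\lesssim\langle r\rangle^{-k-\rho}$ ($k=0,1,2$, some $\rho>0$, $\langle r\rangle=\sqrt{1+r^2}$), and $\mathfrak{g}_2=g_{2,jk}dx^jdx^k$ with $\nabla^\beta g_{2,jk}=O(\langle r\rangle^{-\rho-1-|\beta|})$, $|\beta|\le2$; $dv_{\mathfrak{g}}$ is the Riemannian volume. Hypothesis (H): there exist $\lambda,c>0$ and a nonnegative nontrivial solution $\phi$ of $\Delta_{\mathfrak{g}}\phi=\lambda^2\phi$ on $\mathbb{R}^n$ with $0\le\phi(x)\le c\langle\lambda r\rangle^{-\frac{n-1}2}e^{\lambda\int_0^rK(\tau)d\tau}$.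 Change of time: $m(t)=e^{\int_0^tb(\tau)d\tau}$, $h(t)=\int_0^t\frac{d\tau}{m(\tau)}$, $\eta=h^{-1}$, $\tilde m(t)=m(\eta(t))$, $k=\exp(\int_0^\infty b)$. $\varphi$ is the solution of $\varphi''=\lambda^2\tilde m^2\varphi$ for which there exists $t_0\ge0$ with $(\varphi(t),\varphi'(t))=\big(1+o(1),\,-\lambda k+o(1)\big)e^{-\lambda\int_{t_0}^t\tilde m(\tau)d\tau}$ as $t\to\infty$. *)

theory Defs
  imports "HOL-Analysis.Analysis"
begin

definition jb :: "real \<Rightarrow> real" where
  "jb r = sqrt (1 + r\<^sup>2)"

definition pd :: "'n::finite \<Rightarrow> (real^'n \<Rightarrow> real) \<Rightarrow> real^'n \<Rightarrow> real" where
  "pd j f x = frechet_derivative f (at x) (axis j 1)"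

definition C2_Rn :: "(real^'n::finite \<Rightarrow> real) \<Rightarrow> bool" where
  "C2_Rn f \<longleftrightarrow> f differentiable_on UNIV \<and> (\<forall>j. pd j f differentiable_on UNIV)
      \<and> (\<forall>j k. continuous_on UNIV (pd j (pd k f)))"

definition riemannian_metric :: "(real^'n::finite \<Rightarrow> real^'n^'n) \<Rightarrow> bool" where
  "riemannian_metric g \<longleftrightarrow>
     (\<forall>x. transpose (g x) = g x \<and> (\<forall>v. v \<noteq> 0 \<longrightarrow> v \<bullet> (g x *v v) > 0))
   \<and> (\<forall>j k. C2_Rn (\<lambda>x. g x $ j $ k))"

text \<open>The metric \<open>K(r)^2 dr^2 + r^2 d\<omega>^2\<close> written in Cartesian coordinates at \<open>x \<noteq> 0\<close>:
  with \<open>\<omega> = x/|x|\<close>, \<open>dr = \<omega>\<cdot>dx\<close> and \<open>r^2 d\<omega>^2 = |dx|^2 - dr^2\<close>.\<close>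
definition polar_metric :: "(real \<Rightarrow> real) \<Rightarrow> real^'n::finite \<Rightarrow> real^'n^'n" where
  "polar_metric K x = (\<chi> j k. (K (norm x))\<^sup>2 * (x $ j / norm x) * (x $ k / norm x)
        + ((if j = k then 1 else 0) - (x $ j / norm x) * (x $ k / norm x)))"

definition vol_density :: "(real^'n::finite \<Rightarrow> real^'n^'n) \<Rightarrow> real^'n \<Rightarrow> real" where
  "vol_density g x = sqrt (det (g x))"

definition laplace_beltrami ::
  "(real^'n::finite \<Rightarrow> real^'n^'n) \<Rightarrow> (real^'n \<Rightarrow> real) \<Rightarrow> real^'n \<Rightarrow> real" where
  "laplace_beltrami g f x =
     (1 / vol_density g x) *
     (\<Sum>j\<in>UNIV. pd j (\<lambda>y. vol_density g y * (\<Sum>k\<in>UNIV. matrix_inv (g y) $ j $ k * pd k f y)) x)"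

definition mfun :: "(real \<Rightarrow> real) \<Rightarrow> real \<Rightarrow> real" where
  "mfun b t = exp (integral {0..t} b)"

definition hfun :: "(real \<Rightarrow> real) \<Rightarrow> real \<Rightarrow> real" where
  "hfun b t = integral {0..t} (\<lambda>\<tau>. 1 / mfun b \<tau>)"

definition etafun :: "(real \<Rightarrow> real) \<Rightarrow> real \<Rightarrow> real" where
  "etafun b = inv_into {0..} (hfun b)"

definition mtilde :: "(real \<Rightarrow> real) \<Rightarrow> real \<Rightarrow> real" where
  "mtilde b t = mfun b (etafun b t)"

definition kconst :: "(real \<Rightarrow> real) \<Rightarrow> real" where
  "kconst b = exp (integral {0..} b)"

end

theory Submission
  imports Defs
begin

definition Bb :: "(real \<Rightarrow> real) \<Rightarrow> real" where
  "Bb b = integral {0..} (\<lambda>x. \<bar>b x\<bar>)"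

lemma intb_bound:
  fixes b :: "real \<Rightarrow> real"
  assumes b: "b absolutely_integrable_on {0..}" and t: "0 \<le> t"
  shows "\<bar>integral {0..t} b\<bar> \<le> Bb b"
proof -
  have bt: "b absolutely_integrable_on {0..t}"
    by (rule absolutely_integrable_on_subinterval[OF b]) auto
  have i1: "b integrable_on {0..t}" "(\<lambda>x. \<bar>b x\<bar>) integrable_on {0..t}"
    using bt by (auto simp: absolutely_integrable_on_def)
  have i2: "(\<lambda>x. \<bar>b x\<bar>) integrable_on {0..}"
    using b by (auto simp: absolutely_integrable_on_def)
  have "\<bar>integral {0..t} b\<bar> \<le> integral {0..t} (\<lambda>x. \<bar>b x\<bar>)"
    using integral_norm_bound_integral[OF i1(1) i1(2)] by auto
  also have "\<dots> \<le> integral {0..} (\<lambda>x. \<bar>b x\<bar>)"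
    by (rule integral_subset_le) (use i1 i2 in auto)
  finally show ?thesis unfolding Bb_def .
qed

lemma intb_cont:
  fixes b :: "real \<Rightarrow> real"
  assumes b: "b absolutely_integrable_on {0..}"
  shows "continuous_on {0..} (\<lambda>t. integral {0..t} b)"
proof -
  have "continuous_on {0..T} (\<lambda>t. integral {0..t} b)" for T
  proof -
    have "b absolutely_integrable_on {0..T}"
      by (rule absolutely_integrable_on_subinterval[OF b]) auto
    then have "b integrable_on {0..T}" by (auto simp: absolutely_integrable_on_def)
    then show ?thesis by (rule indefinite_integral_continuous_1)
  qed
  then show ?thesis
    unfolding continuous_on_eq_continuous_within
  proof (intro ballI)
    fix x :: real assume x: "x \<in> {0..}"
    have x0: "0 \<le> x" using x by simp
    have "continuous (at x within {0..x+1}) (\<lambda>t. integral {0..t} b)"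
    proof -
      have "x \<in> {0..x+1}" using x0 by simp
      then show ?thesis using \<open>continuous_on {0..x+1} _\<close> unfolding continuous_on_eq_continuous_within by blast
    qed
    moreover have "at x within {0..x+1} = at x within {0..}"
      by (rule at_within_nhd[of x "{..<x+1}"]) auto
    ultimately show "continuous (at x within {0..}) (\<lambda>t. integral {0..t} b)" by simp
  qed
qed

lemma m_bounds:
  fixes b :: "real \<Rightarrow> real"
  assumes b: "b absolutely_integrable_on {0..}" and t: "0 \<le> t"
  shows "exp (- Bb b) \<le> mfun b t" "mfun b t \<le> exp (Bb b)" "mfun b t > 0"
  using intb_bound[OF b t] by (auto simp: mfun_def)

lemma m_cont:
  fixes b :: "real \<Rightarrow> real"
  assumes b: "b absolutely_integrable_on {0..}"
  shows "continuous_on {0..} (mfun b)"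
  unfolding mfun_def by (intro continuous_on_exp intb_cont b)

lemma invm_cont:
  fixes b :: "real \<Rightarrow> real"
  assumes b: "b absolutely_integrable_on {0..}"
  shows "continuous_on {0..} (\<lambda>t. 1 / mfun b t)"
  by (intro continuous_on_divide continuous_on_const m_cont[OF b])
     (metis atLeast_iff less_irrefl m_bounds(3)[OF b])

lemma h_diff:
  fixes b :: "real \<Rightarrow> real"
  assumes b: "b absolutely_integrable_on {0..}" and s: "0 \<le> s" "s \<le> s'"
  shows "exp (- Bb b) * (s' - s) \<le> hfun b s' - hfun b s"
        "hfun b s' - hfun b s \<le> exp (Bb b) * (s' - s)"
proof -
  have c: "continuous_on {0..s'} (\<lambda>t. 1 / mfun b t)"
    by (rule continuous_on_subset[OF invm_cont[OF b]]) auto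
  have int: "(\<lambda>t. 1 / mfun b t) integrable_on {0..s'}"
    by (rule integrable_continuous_interval[OF c])
  have int2: "(\<lambda>t. 1 / mfun b t) integrable_on {s..s'}"
    by (rule integrable_on_subinterval[OF int]) (use s in auto)
  have eq: "hfun b s' - hfun b s = integral {s..s'} (\<lambda>t. 1 / mfun b t)"
    using Henstock_Kurzweil_Integration.integral_combine[OF s int] unfolding hfun_def by simp
  have "integral {s..s'} (\<lambda>t. exp (- Bb b)) \<le> integral {s..s'} (\<lambda>t. 1 / mfun b t)"
  proof (rule integral_le[OF _ int2])
    fix x assume "x \<in> {s..s'}"
    hence x: "0 \<le> x" using s by auto
    show "exp (- Bb b) \<le> 1 / mfun b x"
      using m_bounds[OF b x] by (simp add: exp_minus field_simps)
  qed auto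
  then show "exp (- Bb b) * (s' - s) \<le> hfun b s' - hfun b s"
    using s eq by (simp add: mult.commute)
  have "integral {s..s'} (\<lambda>t. 1 / mfun b t) \<le> integral {s..s'} (\<lambda>t. exp (Bb b))"
  proof (rule integral_le[OF int2])
    fix x assume "x \<in> {s..s'}"
    hence x: "0 \<le> x" using s by auto
    show "1 / mfun b x \<le> exp (Bb b)"
      using m_bounds[OF b x] by (simp add: exp_minus field_simps)
  qed auto
  then show "hfun b s' - hfun b s \<le> exp (Bb b) * (s' - s)"
    using s eq by (simp add: mult.commute)
qed

lemma h0: "hfun b 0 = 0" by (simp add: hfun_def)

lemma h_cont:
  fixes b :: "real \<Rightarrow> real"
  assumes b: "b absolutely_integrable_on {0..}"
  shows "continuous_on {0..T} (hfun b)"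
proof -
  have c: "continuous_on {0..T} (\<lambda>t. 1 / mfun b t)"
    by (rule continuous_on_subset[OF invm_cont[OF b]]) auto
  show ?thesis unfolding hfun_def
    by (rule indefinite_integral_continuous_1[OF integrable_continuous_interval[OF c]])
qed

lemma h_deriv:
  fixes b :: "real \<Rightarrow> real"
  assumes b: "b absolutely_integrable_on {0..}" and t: "0 < t"
  shows "(hfun b has_real_derivative 1 / mfun b t) (at t)"
proof -
  have c: "continuous_on {0..t+1} (\<lambda>t. 1 / mfun b t)"
    by (rule continuous_on_subset[OF invm_cont[OF b]]) auto
  have "(hfun b has_real_derivative 1 / mfun b t) (at t within {0..t+1})"
    unfolding hfun_def by (rule integral_has_real_derivative[OF c]) (use t in auto)
  moreover have "at t within {0..t+1} = at t"
    by (rule at_within_interior) (use t in auto)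
  ultimately show ?thesis by simp
qed

lemma h_surj:
  fixes b :: "real \<Rightarrow> real"
  assumes b: "b absolutely_integrable_on {0..}" and t: "0 \<le> t"
  shows "t \<in> hfun b ` {0..}"
proof -
  have "hfun b (exp (Bb b) * t) - hfun b 0 \<ge> exp (- Bb b) * (exp (Bb b) * t - 0)"
    by (rule h_diff(1)[OF b]) (use t in auto)
  hence "t \<le> hfun b (exp (Bb b) * t)"
    by (simp add: h0 exp_minus field_simps)
  then obtain s where "0 \<le> s" "s \<le> exp (Bb b) * t" "hfun b s = t"
    using IVT'[of "hfun b" 0 t "exp (Bb b) * t", OF _ _ _ h_cont[OF b]] t by (auto simp: h0)
  thus ?thesis by force
qed

lemma h_inj:
  fixes b :: "real \<Rightarrow> real"
  assumes b: "b absolutely_integrable_on {0..}"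
  shows "inj_on (hfun b) {0..}"
proof (rule inj_onI)
  fix x y :: real assume xy: "x \<in> {0..}" "y \<in> {0..}" "hfun b x = hfun b y"
  show "x = y"
  proof (rule ccontr)
    assume "x \<noteq> y"
    then consider "x < y" | "y < x" by linarith
    then show False
    proof cases
      case 1
      have "exp (- Bb b) * (y - x) \<le> hfun b y - hfun b x" by (rule h_diff(1)[OF b]) (use xy 1 in auto)
      moreover have "exp (- Bb b) * (y - x) > 0" using 1 by simp
      ultimately show False using xy by simp
    next
      case 2
      have "exp (- Bb b) * (x - y) \<le> hfun b x - hfun b y" by (rule h_diff(1)[OF b]) (use xy 2 in auto)
      moreover have "exp (- Bb b) * (x - y) > 0" using 2 by simp
      ultimately show False using xy by simp
    qed
  qed
qed

lemma eta_props:
  fixes b :: "real \<Rightarrow> real"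
  assumes b: "b absolutely_integrable_on {0..}" and t: "0 \<le> t"
  shows "etafun b t \<ge> 0" "hfun b (etafun b t) = t"
proof -
  have "t \<in> hfun b ` {0..}" by (rule h_surj[OF b t])
  then show "etafun b t \<ge> 0" "hfun b (etafun b t) = t"
    unfolding etafun_def using inv_into_into[of t "hfun b" "{0..}"] f_inv_into_f[of t "hfun b" "{0..}"]
    by auto
qed

lemma eta_h:
  fixes b :: "real \<Rightarrow> real"
  assumes b: "b absolutely_integrable_on {0..}" and s: "0 \<le> s"
  shows "etafun b (hfun b s) = s"
  unfolding etafun_def by (rule inv_into_f_f[OF h_inj[OF b]]) (use s in auto)

lemma eta0:
  fixes b :: "real \<Rightarrow> real"
  assumes b: "b absolutely_integrable_on {0..}"
  shows "etafun b 0 = 0"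
  using eta_h[OF b, of 0] by (simp add: h0)

lemma eta_diff:
  fixes b :: "real \<Rightarrow> real"
  assumes b: "b absolutely_integrable_on {0..}" and t: "0 \<le> t" "t \<le> t'"
  shows "exp (- Bb b) * (t' - t) \<le> etafun b t' - etafun b t"
        "etafun b t' - etafun b t \<le> exp (Bb b) * (t' - t)"
        "etafun b t \<le> etafun b t'"
proof -
  let ?s = "etafun b t" and ?s' = "etafun b t'"
  have s: "?s \<ge> 0" "hfun b ?s = t" using eta_props[OF b t(1)] by auto
  have s': "?s' \<ge> 0" "hfun b ?s' = t'" using eta_props[OF b] t by auto
  show le: "?s \<le> ?s'"
  proof (rule ccontr)
    assume "\<not> ?s \<le> ?s'"
    hence "?s' < ?s" by simp
    hence "exp (- Bb b) * (?s - ?s') \<le> hfun b ?s - hfun b ?s'" "exp (- Bb b) * (?s - ?s') > 0"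
      using h_diff(1)[OF b s'(1), of ?s] by auto
    thus False using s s' t by simp
  qed
  have 1: "exp (- Bb b) * (?s' - ?s) \<le> t' - t" and 2: "t' - t \<le> exp (Bb b) * (?s' - ?s)"
    using h_diff[OF b s(1) le] s s' by auto
  from 2 show "exp (- Bb b) * (t' - t) \<le> ?s' - ?s"
    by (simp add: exp_minus field_simps)
  from 1 show "?s' - ?s \<le> exp (Bb b) * (t' - t)"
    by (simp add: exp_minus field_simps)
qed

lemma eta_lin:
  fixes b :: "real \<Rightarrow> real"
  assumes b: "b absolutely_integrable_on {0..}" and t: "0 \<le> t"
  shows "exp (- Bb b) * t \<le> etafun b t" "etafun b t \<le> exp (Bb b) * t"
  using eta_diff[OF b order_refl t] eta0[OF b] by auto

lemma eta_cont:
  fixes b :: "real \<Rightarrow> real"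
  assumes b: "b absolutely_integrable_on {0..}"
  shows "continuous_on {0..} (etafun b)"
proof -
  have "lipschitz_on (exp (Bb b)) {0..} (etafun b)"
    unfolding lipschitz_on_def
  proof (intro conjI ballI)
    fix x y :: real assume xy: "x \<in> {0..}" "y \<in> {0..}"
    show "dist (etafun b x) (etafun b y) \<le> exp (Bb b) * dist x y"
    proof (cases "x \<le> y")
      case True
      then show ?thesis using eta_diff[OF b _ True] xy by (auto simp: dist_real_def abs_if)
    next
      case False
      then show ?thesis using eta_diff[OF b _, of y x] xy by (auto simp: dist_real_def abs_if)
    qed
  qed simp
  then show ?thesis by (rule lipschitz_on_continuous_on)
qed

lemma eta_deriv:
  fixes b :: "real \<Rightarrow> real"
  assumes b: "b absolutely_integrable_on {0..}" and x: "0 < x"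
  shows "(etafun b has_real_derivative mtilde b x) (at x)"
proof -
  have ex: "etafun b x > 0"
    using eta_lin(1)[OF b, of x] x by (smt (verit) exp_gt_zero mult_pos_pos)
  have "(etafun b has_real_derivative inverse (1 / mfun b (etafun b x))) (at x)"
  proof (rule DERIV_inverse_function[where f = "hfun b" and a = 0 and b = "x+1"])
    show "(hfun b has_real_derivative 1 / mfun b (etafun b x)) (at (etafun b x))"
      by (rule h_deriv[OF b ex])
    show "1 / mfun b (etafun b x) \<noteq> 0" using m_bounds(3)[OF b, of "etafun b x"] ex by simp
    show "\<And>y. 0 < y \<Longrightarrow> y < x + 1 \<Longrightarrow> hfun b (etafun b y) = y"
      using eta_props(2)[OF b] by simp
    show "isCont (etafun b) x"
      by (rule continuous_on_interior[OF eta_cont[OF b]]) (use x in \<open>auto simp: interior_Ici\<close>)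
  qed (use x in auto)
  then show ?thesis by (simp add: mtilde_def)
qed

lemma int_mtilde:
  fixes b :: "real \<Rightarrow> real"
  assumes b: "b absolutely_integrable_on {0..}" and t: "0 \<le> a" "a \<le> t"
  shows "integral {a..t} (mtilde b) = etafun b t - etafun b a"
proof -
  have "(mtilde b has_integral (etafun b t - etafun b a)) {a..t}"
  proof (rule fundamental_theorem_of_calculus_interior[OF t(2)])
    show "continuous_on {a..t} (etafun b)"
      by (rule continuous_on_subset[OF eta_cont[OF b]]) (use t in auto)
    fix x assume "x \<in> {a<..<t}"
    hence "x > 0" using t by auto
    then show "(etafun b has_vector_derivative mtilde b x) (at x)"
      using eta_deriv[OF b] by (simp add: has_real_derivative_iff_has_vector_derivative)
  qed
  then show ?thesis by (rule integral_unique)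
qed


lemma at_pos_within: "(x::real) > 0 \<Longrightarrow> at x within {0..} = at x"
  by (rule at_within_interior) (auto simp: interior_Ici)

lemma vphi_main:
  fixes b vphi vphi1 :: "real \<Rightarrow> real" and lam :: real
  assumes b: "b absolutely_integrable_on {0..}"
    and lam: "lam > 0"
    and vphi_ode: "\<forall>t\<ge>0. (vphi has_real_derivative vphi1 t) (at t within {0..})
                     \<and> (vphi1 has_real_derivative lam\<^sup>2 * (mtilde b t)\<^sup>2 * vphi t) (at t within {0..})"
    and vphi_asym: "\<exists>t0\<ge>0.
          ((\<lambda>t. vphi t * exp (lam * integral {t0..t} (mtilde b))) \<longlongrightarrow> 1) at_top
        \<and> ((\<lambda>t. vphi1 t * exp (lam * integral {t0..t} (mtilde b))) \<longlongrightarrow> - lam * kconst b) at_top"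
  shows "\<forall>t\<ge>0. vphi t \<ge> 0" "\<exists>A. \<forall>t\<ge>0. vphi t \<le> A * exp (- lam * etafun b t)"
proof -
  obtain t0 where t0: "t0 \<ge> 0"
    and l1: "((\<lambda>t. vphi t * exp (lam * integral {t0..t} (mtilde b))) \<longlongrightarrow> 1) at_top"
    and l2: "((\<lambda>t. vphi1 t * exp (lam * integral {t0..t} (mtilde b))) \<longlongrightarrow> - lam * kconst b) at_top"
    using vphi_asym by blast
  define E where "E t = exp (lam * (etafun b t - etafun b t0))" for t
  have ev: "eventually (\<lambda>t. exp (lam * integral {t0..t} (mtilde b)) = E t) at_top"
    using eventually_ge_at_top[of t0]
    by eventually_elim (use int_mtilde[OF b t0] in \<open>auto simp: E_def\<close>)
  have L1: "((\<lambda>t. vphi t * E t) \<longlongrightarrow> 1) at_top"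
    by (rule Lim_transform_eventually[OF l1]) (use ev in \<open>auto elim: eventually_mono\<close>)
  have L2: "((\<lambda>t. vphi1 t * E t) \<longlongrightarrow> - lam * kconst b) at_top"
    by (rule Lim_transform_eventually[OF l2]) (use ev in \<open>auto elim: eventually_mono\<close>)
  have Epos: "E t > 0" for t by (simp add: E_def)
  have Einf: "filterlim E at_top at_top"
    unfolding filterlim_at_top
  proof
    fix Z :: real
    define c where "c = lam * exp (- Bb b)"
    have c: "c > 0" using lam by (simp add: c_def)
    show "eventually (\<lambda>t. Z \<le> E t) at_top"
      using eventually_ge_at_top[of "max 0 ((\<bar>Z\<bar> + lam * etafun b t0) / c)"]
    proof eventually_elim
      case (elim t)
      hence t: "t \<ge> 0" "t \<ge> (\<bar>Z\<bar> + lam * etafun b t0) / c" by auto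
      have "c * t \<ge> \<bar>Z\<bar> + lam * etafun b t0" using t(2) c by (simp add: field_simps)
      moreover have "lam * etafun b t \<ge> c * t"
        using eta_lin(1)[OF b t(1)] lam by (simp add: c_def)
      ultimately have "lam * (etafun b t - etafun b t0) \<ge> \<bar>Z\<bar>" by (simp add: algebra_simps)
      moreover have "exp (lam * (etafun b t - etafun b t0)) \<ge> lam * (etafun b t - etafun b t0)"
        using exp_ge_add_one_self[of "lam * (etafun b t - etafun b t0)"] by linarith
      ultimately show ?case by (simp add: E_def)
    qed
  qed
  have Einv: "((\<lambda>t. inverse (E t)) \<longlongrightarrow> 0) at_top"
    by (rule tendsto_inverse_0_at_top[OF Einf])
  have V1: "(vphi1 \<longlongrightarrow> 0) at_top"
  proof -
    have "((\<lambda>t. (vphi1 t * E t) * inverse (E t)) \<longlongrightarrow> (- lam * kconst b) * 0) at_top"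
      by (intro tendsto_mult L2 Einv)
    moreover have "(vphi1 t * E t) * inverse (E t) = vphi1 t" for t using Epos[of t] by simp
    ultimately show ?thesis by simp
  qed
  have cont: "continuous_on {0..} vphi" "continuous_on {0..} vphi1"
    using vphi_ode unfolding continuous_on_eq_continuous_within
    by (auto intro: DERIV_continuous)
  have d1: "(vphi has_real_derivative vphi1 t) (at t)" if "t > 0" for t
    using vphi_ode that at_pos_within[OF that] by (metis less_imp_le)
  have d2: "(vphi1 has_real_derivative lam\<^sup>2 * (mtilde b t)\<^sup>2 * vphi t) (at t)" if "t > 0" for t
    using vphi_ode that at_pos_within[OF that] by (metis less_imp_le)
  have evpos: "eventually (\<lambda>t. vphi t * E t > 1/2) at_top"
    using order_tendstoD(1)[OF L1, of "1/2"] by simp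
  have evlt: "eventually (\<lambda>t. vphi t * E t < 2) at_top"
    using order_tendstoD(2)[OF L1, of 2] by simp
  obtain T where T: "\<And>t. t \<ge> T \<Longrightarrow> vphi t > 0"
  proof -
    obtain T where "\<And>t. t \<ge> T \<Longrightarrow> vphi t * E t > 1/2"
      using evpos unfolding eventually_at_top_linorder by blast
    then show ?thesis using that Epos by (metis (no_types, opaque_lifting) mult_le_0_iff
          less_eq_real_def linorder_not_le order_less_trans zero_less_divide_1_iff zero_less_numeral)
  qed
  show pos: "\<forall>t\<ge>0. vphi t \<ge> 0"
  proof (intro allI impI)
    fix t1 :: real assume t1: "t1 \<ge> 0"
    show "vphi t1 \<ge> 0"
    proof (rule ccontr)
      assume neg: "\<not> vphi t1 \<ge> 0"
      define Z where "Z = {t1..} \<inter> vphi -` {..0}"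
      have Zne: "Z \<noteq> {}" using neg by (auto simp: Z_def)
      have Zb: "bdd_above Z"
      proof (rule bdd_aboveI[of _ "max T t1"])
        fix x assume "x \<in> Z"
        thus "x \<le> max T t1" using T[of x] by (force simp: Z_def)
      qed
      have Zc: "closed Z" unfolding Z_def
        by (rule continuous_closed_preimage) (auto intro: continuous_on_subset[OF cont(1)] simp: t1)
      define z where "z = Sup Z"
      have zZ: "z \<in> Z" unfolding z_def by (rule closed_contains_Sup[OF Zne Zb Zc])
      hence z: "z \<ge> t1" "vphi z \<le> 0" by (auto simp: Z_def)
      have after: "vphi s > 0" if "s > z" for s
      proof (rule ccontr)
        assume "\<not> vphi s > 0"
        hence "s \<in> Z" using that z by (auto simp: Z_def)
        hence "s \<le> z" unfolding z_def by (rule cSup_upper[OF _ Zb])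
        thus False using that by simp
      qed
      have inc: "vphi1 u \<le> vphi1 v" if "z \<le> u" "u \<le> v" for u v
      proof (rule DERIV_nonneg_imp_increasing_open[OF that(2)])
        fix x assume x: "u < x" "x < v"
        have "x > 0" using x that z t1 by linarith
        thus "\<exists>y. (vphi1 has_real_derivative y) (at x) \<and> 0 \<le> y"
          using d2 after[of x] x that by (intro exI[of _ "lam\<^sup>2 * (mtilde b x)\<^sup>2 * vphi x"]) auto
      next
        show "continuous_on {u..v} vphi1"
          by (rule continuous_on_subset[OF cont(2)]) (use that z t1 in auto)
      qed
      have np: "vphi1 u \<le> 0" if "z \<le> u" for u
      proof (rule ccontr)
        assume "\<not> vphi1 u \<le> 0"
        hence "eventually (\<lambda>v. vphi1 v < vphi1 u) at_top"
          using order_tendstoD(2)[OF V1] by simp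
        then obtain W where "\<And>v. v \<ge> W \<Longrightarrow> vphi1 v < vphi1 u"
          unfolding eventually_at_top_linorder by blast
        hence "vphi1 (max W u) < vphi1 u" by simp
        moreover have "vphi1 u \<le> vphi1 (max W u)" by (rule inc) (use that in auto)
        ultimately show False by simp
      qed
      define v where "v = max T (z + 1)"
      have "vphi v \<le> vphi z"
      proof (rule DERIV_nonpos_imp_decreasing_open[of z v vphi])
        show "z \<le> v" by (simp add: v_def)
        fix x assume x: "z < x" "x < v"
        have "x > 0" using x z t1 by linarith
        thus "\<exists>y. (vphi has_real_derivative y) (at x) \<and> y \<le> 0"
          using d1 np[of x] x by auto
      next
        show "continuous_on {z..v} vphi"
          by (rule continuous_on_subset[OF cont(1)]) (use z t1 in auto)
      qed
      moreover have "vphi v > 0" using T[of v] by (simp add: v_def)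
      ultimately show False using z by simp
    qed
  qed
  obtain T2 where T2: "\<And>t. t \<ge> T2 \<Longrightarrow> vphi t * E t < 2"
    using evlt unfolding eventually_at_top_linorder by blast
  have "bounded (vphi ` {0..max 0 T2})"
    by (intro compact_imp_bounded compact_continuous_image continuous_on_subset[OF cont(1)]) auto
  then obtain Mv where Mv: "\<And>t. t \<in> {0..max 0 T2} \<Longrightarrow> \<bar>vphi t\<bar> \<le> Mv"
    unfolding bounded_iff by (auto simp del: atLeastAtMost_iff)
  define A where "A = 2 * exp (lam * etafun b t0) + \<bar>Mv\<bar> * exp (lam * etafun b (max 0 T2))"
  show "\<exists>A. \<forall>t\<ge>0. vphi t \<le> A * exp (- lam * etafun b t)"
  proof (intro exI[of _ A] allI impI)
    fix t :: real assume t: "t \<ge> 0"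
    have e1: "exp (- lam * etafun b t) > 0" by simp
    show "vphi t \<le> A * exp (- lam * etafun b t)"
    proof (cases "t \<ge> max 0 T2")
      case True
      hence "vphi t * E t < 2" using T2 by simp
      hence "vphi t < 2 / E t" using Epos[of t] by (simp add: field_simps)
      also have "2 / E t = 2 * exp (lam * etafun b t0) * exp (- lam * etafun b t)"
        by (simp add: E_def exp_diff exp_minus field_simps right_diff_distrib mult_exp_exp)
      also have "\<dots> \<le> A * exp (- lam * etafun b t)"
        by (intro mult_right_mono) (auto simp: A_def)
      finally show ?thesis by simp
    next
      case False
      hence tt: "t \<in> {0..max 0 T2}" using t by auto
      have "etafun b t \<le> etafun b (max 0 T2)" using eta_diff(3)[OF b t] False by auto
      hence "1 \<le> exp (lam * etafun b (max 0 T2)) * exp (- lam * etafun b t)"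
        using lam by (simp add: mult_exp_exp algebra_simps)
      hence "\<bar>Mv\<bar> \<le> \<bar>Mv\<bar> * exp (lam * etafun b (max 0 T2)) * exp (- lam * etafun b t)"
        by (metis abs_ge_zero mult.assoc mult_le_cancel_left1 linorder_not_le order.strict_iff_not)
      moreover have "vphi t \<le> \<bar>Mv\<bar>" using Mv[OF tt] by linarith
      moreover have "\<bar>Mv\<bar> * exp (lam * etafun b (max 0 T2)) * exp (- lam * etafun b t)
          \<le> A * exp (- lam * etafun b t)"
        by (intro mult_right_mono) (auto simp: A_def)
      ultimately show ?thesis by linarith
    qed
  qed
qed


lemma jb_ge1: "jb r \<ge> 1"
  unfolding jb_def by simp

lemma jb_ge_abs: "jb r \<ge> \<bar>r\<bar>"
proof -
  have "sqrt (r^2) \<le> sqrt (1 + r^2)" by (rule real_sqrt_le_mono) simp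
  thus ?thesis unfolding jb_def by simp
qed

lemma jb_neg_le1: "a \<le> 0 \<Longrightarrow> jb r powr a \<le> 1"
  using powr_mono[of a 0 "jb r"] jb_ge1[of r] by simp

lemma K_facts:
  fixes K K1 K2 :: "real \<Rightarrow> real" and \<rho> :: real
  assumes rho_pos: "\<rho> > 0"
    and K_deriv: "\<forall>r\<ge>0. (K has_real_derivative K1 r) (at r within {0..})
                       \<and> (K1 has_real_derivative K2 r) (at r within {0..})"
    and K_bounds: "\<exists>C. \<forall>r\<ge>0. \<bar>K r - 1\<bar> \<le> C * jb r powr (-\<rho>)
                              \<and> \<bar>K1 r\<bar> \<le> C * jb r powr (-1 - \<rho>)
                              \<and> \<bar>K2 r\<bar> \<le> C * jb r powr (-2 - \<rho>)"
  shows "continuous_on {0..} K"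
    "\<exists>M\<ge>1. \<forall>r\<ge>0. \<bar>K r\<bar> \<le> M"
    "\<exists>r0\<ge>0. \<forall>r\<ge>r0. K r \<ge> 1/2"
proof -
  show "continuous_on {0..} K"
    using K_deriv unfolding continuous_on_eq_continuous_within
    by (auto intro: DERIV_continuous)
  obtain C where C: "\<And>r. r \<ge> 0 \<Longrightarrow> \<bar>K r - 1\<bar> \<le> C * jb r powr (-\<rho>)"
    using K_bounds by blast
  have C': "\<bar>K r - 1\<bar> \<le> \<bar>C\<bar> * jb r powr (-\<rho>)" if "r \<ge> 0" for r
  proof -
    have "C * jb r powr (-\<rho>) \<le> \<bar>C\<bar> * jb r powr (-\<rho>)" by (rule mult_right_mono) auto
    thus ?thesis using C[OF that] by linarith
  qed
  show "\<exists>M\<ge>1. \<forall>r\<ge>0. \<bar>K r\<bar> \<le> M"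
  proof (intro exI[of _ "1 + \<bar>C\<bar>"] conjI allI impI)
    fix r :: real assume r: "r \<ge> 0"
    have "\<bar>C\<bar> * jb r powr (-\<rho>) \<le> \<bar>C\<bar>"
      using jb_neg_le1[of "-\<rho>" r] rho_pos by (simp add: mult_left_le)
    thus "\<bar>K r\<bar> \<le> 1 + \<bar>C\<bar>" using C'[OF r] by linarith
  qed simp
  have "((\<lambda>r. r powr (-\<rho>)) \<longlongrightarrow> 0) at_top"
    by (rule tendsto_neg_powr) (use rho_pos in \<open>auto intro: filterlim_ident\<close>)
  hence "((\<lambda>r. \<bar>C\<bar> * r powr (-\<rho>)) \<longlongrightarrow> \<bar>C\<bar> * 0) at_top"
    by (intro tendsto_mult tendsto_const)
  hence "eventually (\<lambda>r. \<bar>C\<bar> * r powr (-\<rho>) < 1/2) at_top"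
    by (intro order_tendstoD(2)) auto
  then obtain r0 where r0: "\<And>r. r \<ge> r0 \<Longrightarrow> \<bar>C\<bar> * r powr (-\<rho>) < 1/2"
    unfolding eventually_at_top_linorder by blast
  show "\<exists>r0\<ge>0. \<forall>r\<ge>r0. K r \<ge> 1/2"
  proof (intro exI[of _ "max 1 r0"] conjI allI impI)
    fix r assume r: "max 1 r0 \<le> r"
    hence rp: "r > 0" by simp
    have "jb r powr (-\<rho>) \<le> r powr (-\<rho>)"
      by (rule powr_mono2') (use rho_pos rp jb_ge_abs[of r] in auto)
    hence "\<bar>K r - 1\<bar> \<le> \<bar>C\<bar> * r powr (-\<rho>)"
    proof -
      have "\<bar>C\<bar> * jb r powr (-\<rho>) \<le> \<bar>C\<bar> * r powr (-\<rho>)"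
        by (rule mult_left_mono) (use \<open>jb r powr (-\<rho>) \<le> r powr (-\<rho>)\<close> in auto)
      thus ?thesis using C'[of r] rp by linarith
    qed
    thus "K r \<ge> 1/2" using r0[of r] r by linarith
  qed simp
qed

lemma F_split:
  fixes K :: "real \<Rightarrow> real"
  assumes Kc: "continuous_on {0..} K" and rs: "0 \<le> r" "r \<le> s"
  shows "integral {0..s} K - integral {0..r} K = integral {r..s} K"
proof -
  have "K integrable_on {0..s}"
    by (rule integrable_continuous_interval, rule continuous_on_subset[OF Kc]) auto
  from Henstock_Kurzweil_Integration.integral_combine[OF rs this] show ?thesis by simp
qed

lemma int_lower:
  fixes K :: "real \<Rightarrow> real"
  assumes Kc: "continuous_on {0..} K" and rs: "0 \<le> r" "r \<le> s"
    and lb: "\<And>x. x \<in> {r..s} \<Longrightarrow> c \<le> K x"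
  shows "c * (s - r) \<le> integral {r..s} K"
proof -
  have "K integrable_on {r..s}"
    by (rule integrable_continuous_interval, rule continuous_on_subset[OF Kc]) (use rs in auto)
  hence "integral {r..s} (\<lambda>x. c) \<le> integral {r..s} K"
    by (intro integral_le) (auto intro: lb)
  thus ?thesis using rs by (simp add: mult.commute)
qed

lemma int_upper:
  fixes K :: "real \<Rightarrow> real"
  assumes Kc: "continuous_on {0..} K" and rs: "0 \<le> r" "r \<le> s"
    and ub: "\<And>x. x \<in> {r..s} \<Longrightarrow> K x \<le> c"
  shows "integral {r..s} K \<le> c * (s - r)"
proof -
  have "K integrable_on {r..s}"
    by (rule integrable_continuous_interval, rule continuous_on_subset[OF Kc]) (use rs in auto)
  hence "integral {r..s} K \<le> integral {r..s} (\<lambda>x. c)"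
    by (intro integral_le) (auto intro: ub)
  thus ?thesis using rs by (simp add: mult.commute)
qed

lemma half_conv: "s - r - 4 * (M * r0) \<le> 2 * (X::real) \<Longrightarrow> (s - r) / 2 - 2 * M * r0 \<le> X"
  by (simp add: field_simps)

lemma F_growth:
  fixes K :: "real \<Rightarrow> real"
  assumes Kc: "continuous_on {0..} K" and rs: "0 \<le> r" "r \<le> s"
    and M: "M \<ge> 1" "\<And>x. x \<ge> 0 \<Longrightarrow> \<bar>K x\<bar> \<le> M"
    and r0: "r0 \<ge> 0" "\<And>x. x \<ge> r0 \<Longrightarrow> K x \<ge> 1/2"
  shows "integral {0..s} K - integral {0..r} K \<ge> (s - r) / 2 - 2 * M * r0"
proof (rule half_conv)
  have lowM: "\<And>x. x \<ge> 0 \<Longrightarrow> - M \<le> K x" using M(2) by (smt (verit))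
  note sp = F_split[OF Kc rs]
  have f: "r0 \<le> M * r0" using M r0 by (simp add: mult_le_cancel_right1)
  consider "s \<le> r0" | "r0 \<le> r" | "r < r0" "r0 < s" by linarith
  then show "s - r - 4 * (M * r0) \<le> 2 * (integral {0..s} K - integral {0..r} K)"
  proof cases
    case 1
    have "- M * (s - r) \<le> integral {r..s} K"
      by (rule int_lower[OF Kc rs]) (use rs lowM in auto)
    hence a: "- (M * s) + M * r \<le> integral {r..s} K" by (simp add: algebra_simps)
    have "M * (s - r) \<le> M * r0" using 1 rs M by (intro mult_left_mono) auto
    hence b: "M * s - M * r \<le> M * r0" by (simp add: algebra_simps)
    show ?thesis using sp a b f 1 rs r0(1) by (smt (verit))
  next
    case 2
    have "1/2 * (s - r) \<le> integral {r..s} K"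
      by (rule int_lower[OF Kc rs]) (use 2 r0 in auto)
    hence a: "s - r \<le> 2 * integral {r..s} K" by simp
    have "0 \<le> M * r0" using M r0 by simp
    then show ?thesis using sp a by (smt (verit))
  next
    case 3
    have "- M * (r0 - r) \<le> integral {r..r0} K"
      by (rule int_lower[OF Kc]) (use rs 3 lowM in auto)
    hence a: "M * r - M * r0 \<le> integral {r..r0} K" by (simp add: algebra_simps)
    have "1/2 * (s - r0) \<le> integral {r0..s} K"
      by (rule int_lower[OF Kc]) (use 3 r0 in auto)
    hence b: "s - r0 \<le> 2 * integral {r0..s} K" by simp
    have c: "integral {0..r0} K - integral {0..r} K = integral {r..r0} K"
      by (rule F_split[OF Kc]) (use rs 3 in auto)
    have d: "integral {0..s} K - integral {0..r0} K = integral {r0..s} K"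
      by (rule F_split[OF Kc]) (use rs 3 r0 in auto)
    have g: "M * r \<ge> 0" using M rs by simp
    show ?thesis using a b c d f g rs r0(1) by (smt (verit))
  qed
qed

lemma F_upper:
  fixes K :: "real \<Rightarrow> real"
  assumes Kc: "continuous_on {0..} K" and r: "0 \<le> r"
    and M: "\<And>x. x \<ge> 0 \<Longrightarrow> \<bar>K x\<bar> \<le> M"
  shows "integral {0..r} K \<le> M * r"
  using int_upper[OF Kc order_refl r, of M] M by (auto simp: abs_le_iff)


lemma jb_neg_le1': "a \<le> 0 \<Longrightarrow> jb r powr a \<le> 1"
proof -
  assume a: "a \<le> 0"
  have "jb r \<ge> 1" unfolding jb_def by simp
  thus ?thesis using powr_mono[of a 0 "jb r"] a by simp
qed

lemma det_bound:
  fixes A :: "real^'n::finite^'n"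
  assumes "\<And>i j. \<bar>A $ i $ j\<bar> \<le> G"
  shows "\<bar>det A\<bar> \<le> real (card {p. p permutes (UNIV :: 'n set)}) * G ^ CARD('n)"
proof -
  have "\<bar>det A\<bar> \<le> (\<Sum>p\<in>{p. p permutes (UNIV :: 'n set)}. \<bar>of_int (sign p) * (\<Prod>i\<in>UNIV. A $ i $ p i)\<bar>)"
    unfolding det_def by (rule sum_abs)
  also have "\<dots> \<le> (\<Sum>p\<in>{p. p permutes (UNIV :: 'n set)}. G ^ CARD('n))"
  proof (rule sum_mono)
    fix p :: "'n \<Rightarrow> 'n"
    have s: "\<bar>of_int (sign p) :: real\<bar> = 1" by (simp add: sign_def)
    have "\<bar>\<Prod>i\<in>UNIV. A $ i $ p i\<bar> = (\<Prod>i\<in>UNIV. \<bar>A $ i $ p i\<bar>)" by (rule abs_prod)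
    also have "\<dots> \<le> (\<Prod>i\<in>(UNIV::'n set). G)"
      by (rule prod_mono) (use assms in auto)
    also have "\<dots> = G ^ CARD('n)" by simp
    finally show "\<bar>of_int (sign p) * (\<Prod>i\<in>UNIV. A $ i $ p i)\<bar> \<le> G ^ CARD('n)"
      by (simp add: abs_mult s)
  qed
  also have "\<dots> = real (card {p. p permutes (UNIV :: 'n set)}) * G ^ CARD('n)" by simp
  finally show ?thesis .
qed

lemma vol_bound:
  fixes g g2 :: "real^'n::finite \<Rightarrow> real^'n^'n" and K :: "real \<Rightarrow> real"
  assumes decomp: "\<forall>x. x \<noteq> 0 \<longrightarrow> g x = polar_metric K x + g2 x"
    and rho_pos: "\<rho> > 0"
    and KM: "\<And>r. r \<ge> 0 \<Longrightarrow> \<bar>K r\<bar> \<le> M"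
    and g2_bounds: "\<exists>C. \<forall>j k x. \<bar>g2 x $ j $ k\<bar> \<le> C * jb (norm x) powr (-\<rho> - 1)
                      \<and> (\<forall>i. \<bar>pd i (\<lambda>y. g2 y $ j $ k) x\<bar> \<le> C * jb (norm x) powr (-\<rho> - 2))
                      \<and> (\<forall>i l. \<bar>pd i (pd l (\<lambda>y. g2 y $ j $ k)) x\<bar> \<le> C * jb (norm x) powr (-\<rho> - 3))"
  shows "\<exists>V. \<forall>x. vol_density g x \<le> V"
proof -
  obtain Cg where Cg: "\<And>j k x. \<bar>g2 x $ j $ k\<bar> \<le> Cg * jb (norm x) powr (-\<rho> - 1)"
    using g2_bounds by blast
  have g2b: "\<bar>g2 x $ j $ k\<bar> \<le> \<bar>Cg\<bar>" for x j k
  proof -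
    have "Cg * jb (norm x) powr (-\<rho> - 1) \<le> \<bar>Cg\<bar> * jb (norm x) powr (-\<rho> - 1)"
      by (rule mult_right_mono) auto
    also have "\<dots> \<le> \<bar>Cg\<bar>"
      using jb_neg_le1'[of "-\<rho> - 1" "norm x"] rho_pos by (simp add: mult_left_le)
    finally show ?thesis using Cg[of x j k] by linarith
  qed
  define G where "G = M\<^sup>2 + 2 + \<bar>Cg\<bar> + (\<Sum>j\<in>UNIV. \<Sum>k\<in>UNIV. \<bar>g 0 $ j $ k\<bar>)"
  have Gent: "\<bar>g x $ j $ k\<bar> \<le> G" for x j k
  proof (cases "x = 0")
    case True
    have s1: "\<bar>g 0 $ j $ k\<bar> \<le> (\<Sum>k\<in>UNIV. \<bar>g 0 $ j $ k\<bar>)"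
      by (rule member_le_sum) simp_all
    have s2: "(\<Sum>k\<in>UNIV. \<bar>g 0 $ j $ k\<bar>) \<le> (\<Sum>j\<in>UNIV. \<Sum>k\<in>UNIV. \<bar>g 0 $ j $ k\<bar>)"
      by (rule member_le_sum[where f="\<lambda>j. \<Sum>k\<in>UNIV. \<bar>g 0 $ j $ k\<bar>"]) (simp_all add: sum_nonneg)
    have s3: "0 \<le> M\<^sup>2 + 2 + \<bar>Cg\<bar>" by simp
    have "\<bar>g 0 $ j $ k\<bar> \<le> G" unfolding G_def by (rule add_increasing[OF s3 order_trans[OF s1 s2]])
    thus ?thesis using True by simp
  next
    case False
    define u where "u = x $ j / norm x"
    define v where "v = x $ k / norm x"
    have nx: "norm x > 0" using False by simp
    have u: "\<bar>u\<bar> \<le> 1"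
    proof -
      have "\<bar>x $ j\<bar> \<le> norm x" by (rule component_le_norm_cart)
      hence "\<bar>x $ j\<bar> / norm x \<le> 1" using nx by (simp add: divide_le_eq)
      thus ?thesis unfolding u_def using nx by (simp add: abs_divide)
    qed
    have v: "\<bar>v\<bar> \<le> 1"
    proof -
      have "\<bar>x $ k\<bar> \<le> norm x" by (rule component_le_norm_cart)
      hence "\<bar>x $ k\<bar> / norm x \<le> 1" using nx by (simp add: divide_le_eq)
      thus ?thesis unfolding v_def using nx by (simp add: abs_divide)
    qed
    have uv: "\<bar>u * v\<bar> \<le> 1" using u v by (simp add: abs_mult mult_le_one)
    have KK: "(K (norm x))\<^sup>2 \<le> M\<^sup>2"
    proof -
      have "\<bar>K (norm x)\<bar>\<^sup>2 \<le> M\<^sup>2" by (rule power_mono[OF KM]) auto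
      thus ?thesis by simp
    qed
    have e: "g x $ j $ k = (K (norm x))\<^sup>2 * u * v + ((if j = k then 1 else 0) - u * v) + g2 x $ j $ k"
      using decomp False by (simp add: polar_metric_def u_def v_def)
    have "\<bar>(K (norm x))\<^sup>2 * u * v\<bar> \<le> M\<^sup>2"
    proof -
      have "\<bar>(K (norm x))\<^sup>2 * u * v\<bar> = (K (norm x))\<^sup>2 * \<bar>u * v\<bar>" by (simp add: abs_mult)
      also have "\<dots> \<le> (K (norm x))\<^sup>2 * 1" by (rule mult_left_mono[OF uv]) simp
      finally show ?thesis using KK by simp
    qed
    moreover have "\<bar>(if j = k then 1 else 0) - u * v\<bar> \<le> 2" using uv by auto
    moreover have "0 \<le> (\<Sum>j\<in>UNIV. \<Sum>k\<in>UNIV. \<bar>g 0 $ j $ k\<bar>)" by (auto intro: sum_nonneg)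
    moreover have "\<bar>(K (norm x))\<^sup>2 * u * v + ((if j = k then 1 else 0) - u * v) + g2 x $ j $ k\<bar>
       \<le> \<bar>(K (norm x))\<^sup>2 * u * v\<bar> + \<bar>(if j = k then 1 else 0) - u * v\<bar> + \<bar>g2 x $ j $ k\<bar>"
      by (rule order_trans[OF abs_triangle_ineq add_right_mono[OF abs_triangle_ineq]])
    ultimately show ?thesis unfolding e G_def using g2b[of x j k] by linarith
  qed
  define P where "P = real (card {p. p permutes (UNIV :: 'n set)})"
  show ?thesis
  proof (intro exI[of _ "sqrt (P * G ^ CARD('n))"] allI)
    fix x
    have "\<bar>det (g x)\<bar> \<le> P * G ^ CARD('n)" unfolding P_def by (rule det_bound[OF Gent])
    hence "det (g x) \<le> P * G ^ CARD('n)" by simp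
    thus "vol_density g x \<le> sqrt (P * G ^ CARD('n))"
      unfolding vol_density_def by simp
  qed
qed


lemma pow_diff_le:
  fixes x y :: real
  assumes "0 \<le> y" "y \<le> x"
  shows "x ^ n - y ^ n \<le> real n * x ^ (n - 1) * (x - y)"
proof -
  have "x ^ n - y ^ n = (x - y) * (\<Sum>i<n. y ^ (n - Suc i) * x ^ i)" by (rule power_diff_sumr2)
  also have "\<dots> \<le> (x - y) * (real n * x ^ (n - 1))"
  proof (rule mult_left_mono)
    have "(\<Sum>i<n. y ^ (n - Suc i) * x ^ i) \<le> (\<Sum>i<n. x ^ (n - Suc i) * x ^ i)"
      by (intro sum_mono mult_right_mono power_mono) (use assms in auto)
    also have "(\<Sum>i<n. x ^ (n - Suc i) * x ^ i) = (\<Sum>i<n. x ^ (n - 1))"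
      by (intro sum.cong refl) (simp add: power_add[symmetric])
    also have "\<dots> = real n * x ^ (n - 1)" by simp
    finally show "(\<Sum>i<n. y ^ (n - Suc i) * x ^ i) \<le> real n * x ^ (n - 1)" .
  qed (use assms in simp)
  finally show ?thesis by (simp add: mult.commute mult.left_commute)
qed

lemma summable_powexp:
  fixes p \<gamma> :: real
  assumes g: "\<gamma> > 0"
  shows "summable (\<lambda>j::nat. (real j + 1) powr p * exp (- \<gamma> * real j))"
proof -
  have l: "((\<lambda>j::nat. (real j + 2) / (real j + 1)) \<longlongrightarrow> 1) sequentially"
  proof -
    have "(\<lambda>j. inverse (real (Suc j))) \<longlonglongrightarrow> 0" by (rule LIMSEQ_inverse_real_of_nat)
    hence "(\<lambda>j. 1 / (real j + 1)) \<longlonglongrightarrow> 0" by (simp add: inverse_eq_divide add.commute)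
    hence "((\<lambda>j::nat. 1 + 1 / (real j + 1)) \<longlongrightarrow> 1 + 0) sequentially"
      by (intro tendsto_add tendsto_const)
    moreover have "1 + 1 / (real j + 1) = (real j + 2) / (real j + 1)" for j :: nat
      by (simp add: field_simps)
    ultimately show ?thesis by simp
  qed
  have TT: "((\<lambda>j::nat. ((real j + 2) / (real j + 1)) powr p) \<longlongrightarrow> 1 powr p) sequentially"
    by (rule tendsto_powr[OF l tendsto_const]) simp
  have g2: "\<gamma> / 2 > 0" using g by simp
  have "1 powr p < exp (\<gamma> / 2)" using g2 by simp
  hence "eventually (\<lambda>j. ((real j + 2) / (real j + 1)) powr p < exp (\<gamma> / 2)) sequentially"
    by (rule order_tendstoD(2)[OF TT])
  then obtain N where N: "\<And>j. j \<ge> N \<Longrightarrow> ((real j + 2) / (real j + 1)) powr p < exp (\<gamma> / 2)"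
    unfolding eventually_sequentially by blast
  show ?thesis
  proof (rule summable_ratio_test[of "exp (- \<gamma> / 2)" N])
    show "exp (- \<gamma> / 2) < 1" using g by simp
    fix j :: nat assume j: "j \<ge> N"
    have pos: "real j + 1 > 0" by simp
    have "(real (Suc j) + 1) powr p = ((real j + 2) / (real j + 1)) powr p * (real j + 1) powr p"
      by (simp add: powr_divide add.commute)
    hence "(real (Suc j) + 1) powr p * exp (- \<gamma> * real (Suc j))
        = ((real j + 2) / (real j + 1)) powr p * exp (- \<gamma>) * ((real j + 1) powr p * exp (- \<gamma> * real j))"
      by (simp add: algebra_simps exp_add[symmetric])
    also have "\<dots> \<le> exp (\<gamma> / 2) * exp (- \<gamma>) * ((real j + 1) powr p * exp (- \<gamma> * real j))"
      by (intro mult_right_mono) (use N[OF j] in auto)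
    also have "exp (\<gamma> / 2) * exp (- \<gamma>) = exp (- \<gamma> / 2)" by (simp add: exp_add[symmetric])
    finally show "norm ((real (Suc j) + 1) powr p * exp (- \<gamma> * real (Suc j)))
        \<le> exp (- \<gamma> / 2) * norm ((real j + 1) powr p * exp (- \<gamma> * real j))" by simp
  qed
qed

lemma term_bound:
  fixes \<beta> :: real and k K0 :: nat
  assumes "k \<le> K0"
  shows "(real k + 1) powr \<beta> \<le> (real K0 + 1) powr \<beta> * (real (K0 - k) + 1) powr \<bar>\<beta>\<bar>"
proof (cases "\<beta> \<ge> 0")
  case True
  have "(real k + 1) powr \<beta> \<le> (real K0 + 1) powr \<beta>"
    by (rule powr_mono2) (use True assms in auto)
  moreover have "1 \<le> (real (K0 - k) + 1) powr \<bar>\<beta>\<bar>" by (rule ge_one_powr_ge_zero) auto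
  moreover have "0 \<le> (real K0 + 1) powr \<beta>" by simp
  ultimately show ?thesis by (metis mult.right_neutral mult_left_mono order_trans)
next
  case False
  define X where "X = real (K0 - k) + 1"
  have X: "X \<ge> 1" by (simp add: X_def)
  have le: "real K0 + 1 \<le> (real k + 1) * X"
  proof -
    have "(real k + 1) * X = (real k + 1) * real (K0 - k) + real k + 1" by (simp add: X_def algebra_simps)
    moreover have "real (K0 - k) \<le> (real k + 1) * real (K0 - k)" by (simp add: mult_le_cancel_right1)
    moreover have "real (K0 - k) + real k = real K0" using assms by simp
    ultimately show ?thesis by linarith
  qed
  have "(real K0 + 1) powr (- \<beta>) \<le> ((real k + 1) * X) powr (- \<beta>)"
    by (rule powr_mono2) (use False le in auto)
  also have "\<dots> = (real k + 1) powr (- \<beta>) * X powr (- \<beta>)" by (rule powr_mult)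
  finally have A: "(real K0 + 1) powr (- \<beta>) \<le> (real k + 1) powr (- \<beta>) * X powr (- \<beta>)" .
  have e1: "(real k + 1) powr \<beta> * (real k + 1) powr (- \<beta>) = 1"
    by (simp add: powr_add[symmetric])
  have e2: "(real K0 + 1) powr \<beta> * (real K0 + 1) powr (- \<beta>) = 1"
    by (simp add: powr_add[symmetric])
  have "(real k + 1) powr \<beta> = (real k + 1) powr \<beta> * ((real K0 + 1) powr \<beta> * (real K0 + 1) powr (- \<beta>))"
    using e2 by simp
  also have "\<dots> \<le> (real k + 1) powr \<beta> * ((real K0 + 1) powr \<beta> * ((real k + 1) powr (- \<beta>) * X powr (- \<beta>)))"
    by (intro mult_left_mono A) auto
  also have "\<dots> = ((real k + 1) powr \<beta> * (real k + 1) powr (- \<beta>)) * (real K0 + 1) powr \<beta> * X powr (- \<beta>)"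
    by (simp add: algebra_simps)
  also have "\<dots> = (real K0 + 1) powr \<beta> * X powr \<bar>\<beta>\<bar>" using e1 False by simp
  finally show ?thesis by (simp add: X_def)
qed

lemma sum_bound:
  fixes \<beta> \<gamma> :: real
  assumes g: "\<gamma> > 0"
  shows "\<exists>S\<ge>0. \<forall>K0::nat. (\<Sum>k\<le>K0. (real k + 1) powr \<beta> * exp (- \<gamma> * (real K0 - real k)))
            \<le> S * (real K0 + 1) powr \<beta>"
proof -
  define a where "a j = (real j + 1) powr \<bar>\<beta>\<bar> * exp (- \<gamma> * real j)" for j :: nat
  have sa: "summable a" unfolding a_def by (rule summable_powexp[OF g])
  have a0: "a j \<ge> 0" for j by (simp add: a_def)
  define S where "S = suminf a"
  have S0: "S \<ge> 0" unfolding S_def by (rule suminf_nonneg[OF sa a0])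
  show ?thesis
  proof (intro exI[of _ S] conjI allI)
    fix K0 :: nat
    have "(\<Sum>k\<le>K0. (real k + 1) powr \<beta> * exp (- \<gamma> * (real K0 - real k)))
        \<le> (\<Sum>k\<le>K0. (real K0 + 1) powr \<beta> * a (K0 - k))"
    proof (rule sum_mono)
      fix k assume "k \<in> {..K0}"
      hence k: "k \<le> K0" by simp
      have "(real k + 1) powr \<beta> * exp (- \<gamma> * (real K0 - real k))
          \<le> ((real K0 + 1) powr \<beta> * (real (K0 - k) + 1) powr \<bar>\<beta>\<bar>) * exp (- \<gamma> * (real K0 - real k))"
        by (intro mult_right_mono term_bound k) simp
      also have "\<dots> = (real K0 + 1) powr \<beta> * a (K0 - k)"
        using k by (simp add: a_def of_nat_diff)
      finally show "(real k + 1) powr \<beta> * exp (- \<gamma> * (real K0 - real k)) \<le> (real K0 + 1) powr \<beta> * a (K0 - k)" .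
    qed
    also have "\<dots> = (real K0 + 1) powr \<beta> * (\<Sum>k\<le>K0. a (K0 - k))"
      by (simp add: sum_distrib_left)
    also have "(\<Sum>k\<le>K0. a (K0 - k)) = (\<Sum>k\<le>K0. a k)"
    proof -
      have "(\<Sum>k<Suc K0. a (Suc K0 - Suc k)) = (\<Sum>k<Suc K0. a k)"
        by (rule sum.nat_diff_reindex)
      thus ?thesis by (simp add: lessThan_Suc_atMost)
    qed
    also have "(\<Sum>k\<le>K0. a k) \<le> S" unfolding S_def
      by (rule sum_le_suminf[OF sa]) (auto simp: a0)
    finally show "(\<Sum>k\<le>K0. (real k + 1) powr \<beta> * exp (- \<gamma> * (real K0 - real k))) \<le> S * (real K0 + 1) powr \<beta>"
      by (simp add: mult_left_mono mult.commute)
  qed (rule S0)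
qed


lemma K0_pow:
  fixes R \<beta> :: real
  assumes R: "R \<ge> 0"
  shows "(real (nat \<lfloor>R\<rfloor>) + 1) powr \<beta> \<le> 2 powr \<bar>\<beta>\<bar> * (1 + R) powr \<beta>"
proof -
  define X where "X = real (nat \<lfloor>R\<rfloor>) + 1"
  have X1: "X \<le> 1 + R" unfolding X_def using R by linarith
  have X2: "R < X" unfolding X_def using R by linarith
  have X3: "1 \<le> X" unfolding X_def by simp
  have X4: "(1 + R) / 2 \<le> X" using X2 X3 by (simp add: field_simps)
  show ?thesis
  proof (cases "\<beta> \<ge> 0")
    case True
    have "X powr \<beta> \<le> (1 + R) powr \<beta>" by (rule powr_mono2) (use True X1 X3 in auto)
    also have "\<dots> \<le> 2 powr \<bar>\<beta>\<bar> * (1 + R) powr \<beta>"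
      by (rule mult_left_le_one_le[THEN order_trans[OF _ order_refl], of "(1+R) powr \<beta>" "2 powr \<bar>\<beta>\<bar>", THEN order_trans[OF order_refl]] | 
          rule order_trans[OF _ mult_right_mono[of 1 "2 powr \<bar>\<beta>\<bar>"]]) (auto intro: ge_one_powr_ge_zero)
    finally show ?thesis by (simp add: X_def)
  next
    case False
    have "X powr \<beta> \<le> ((1 + R) / 2) powr \<beta>" by (rule powr_mono2') (use False X4 R in auto)
    also have "\<dots> = (1 + R) powr \<beta> / 2 powr \<beta>" by (rule powr_divide)
    also have "\<dots> = 2 powr \<bar>\<beta>\<bar> * (1 + R) powr \<beta>" using False by (simp add: powr_minus divide_inverse)
    finally show ?thesis by (simp add: X_def)
  qed
qed

lemma shell_integral:
  fixes \<alpha> \<gamma> C4 :: real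
  assumes a: "\<alpha> \<ge> 0" and g: "\<gamma> > 0" and C4: "C4 \<ge> 0"
  shows "\<exists>Cst. \<forall>(f :: real^'n::finite \<Rightarrow> real) R. R \<ge> 0 \<longrightarrow> (\<forall>x. R < norm x \<longrightarrow> f x \<le> 0) \<longrightarrow>
     (\<forall>x. norm x \<le> R \<longrightarrow> f x \<le> C4 * (1 + norm x) powr (-\<alpha>) * exp (-\<gamma> * (R - norm x))) \<longrightarrow>
     (\<integral>\<^sup>+x. ennreal (f x) \<partial>lborel) \<le> ennreal (Cst * (1 + R) powr (real CARD('n) - 1 - \<alpha>))"
proof -
  define n where "n = CARD('n)"
  define \<beta> where "\<beta> = real n - 1 - \<alpha>"
  define \<omega> where "\<omega> = unit_ball_vol (real n)"
  have n1: "n \<ge> 1" unfolding n_def by (simp add: Suc_le_eq)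
  have \<omega>0: "\<omega> \<ge> 0" unfolding \<omega>_def by simp
  obtain S where S0: "S \<ge> 0" and S: "\<And>K0::nat. (\<Sum>k\<le>K0. (real k + 1) powr \<beta> * exp (- \<gamma> * (real K0 - real k)))
            \<le> S * (real K0 + 1) powr \<beta>"
    using sum_bound[OF g, of \<beta>] by blast
  define Cst where "Cst = C4 * \<omega> * real n * exp \<gamma> * S * 2 powr \<bar>\<beta>\<bar>"
  show ?thesis
  proof (intro exI[of _ Cst] allI impI)
    fix f :: "real^'n \<Rightarrow> real" and R :: real
    assume R: "R \<ge> 0" and out: "\<forall>x. R < norm x \<longrightarrow> f x \<le> 0"
      and inn: "\<forall>x. norm x \<le> R \<longrightarrow> f x \<le> C4 * (1 + norm x) powr (-\<alpha>) * exp (-\<gamma> * (R - norm x))"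
    define K0 where "K0 = nat \<lfloor>R\<rfloor>"
    define Sh where "Sh k = ball (0::real^'n) (real k + 1) - ball 0 (real k)" for k :: nat
    define s where "s k = C4 * (real k + 1) powr (-\<alpha>) * exp (-\<gamma> * (R - real k - 1))" for k :: nat
    have s0: "s k \<ge> 0" for k using C4 by (simp add: s_def)
    have Shm: "Sh k \<in> sets lborel" for k unfolding Sh_def by auto
    have pw: "ennreal (f x) \<le> (\<Sum>k\<le>K0. ennreal (s k) * indicator (Sh k) x)" for x
    proof (cases "R < norm x")
      case True
      hence "f x \<le> 0" using out by simp
      hence "ennreal (f x) = 0" by (rule ennreal_neg)
      thus ?thesis by simp
    next
      case False
      define k where "k = nat \<lfloor>norm x\<rfloor>"
      have k1: "real k \<le> norm x" unfolding k_def using norm_ge_zero[of x] by linarith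
      have k2: "norm x < real k + 1" unfolding k_def using norm_ge_zero[of x] by linarith
      have kK: "k \<le> K0" unfolding k_def K0_def using False by (simp add: nat_mono floor_mono)
      have xin: "x \<in> Sh k" unfolding Sh_def using k1 k2 by auto
      have "f x \<le> C4 * (1 + norm x) powr (-\<alpha>) * exp (-\<gamma> * (R - norm x))" using inn False by simp
      also have "\<dots> \<le> s k" unfolding s_def
      proof (intro mult_mono)
        show "(1 + norm x) powr (-\<alpha>) \<le> (real k + 1) powr (-\<alpha>)"
          by (rule powr_mono2') (use a k1 in auto)
        show "exp (-\<gamma> * (R - norm x)) \<le> exp (-\<gamma> * (R - real k - 1))"
          using g k2 by (simp add: mult_left_mono)
      qed (use C4 in auto)
      finally have fs: "f x \<le> s k" .
      have "ennreal (f x) \<le> ennreal (s k) * indicator (Sh k) x"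
        using fs xin by (simp add: ennreal_leI)
      also have "\<dots> \<le> (\<Sum>k\<le>K0. ennreal (s k) * indicator (Sh k) x)"
        by (rule member_le_sum[where f = "\<lambda>k. ennreal (s k) * indicator (Sh k) x"]) (use kK in auto)
      finally show ?thesis .
    qed
    have "(\<integral>\<^sup>+x. ennreal (f x) \<partial>lborel) \<le> (\<integral>\<^sup>+x. (\<Sum>k\<le>K0. ennreal (s k) * indicator (Sh k) x) \<partial>lborel)"
      by (rule nn_integral_mono) (rule pw)
    also have "\<dots> = (\<Sum>k\<le>K0. \<integral>\<^sup>+x. ennreal (s k) * indicator (Sh k) x \<partial>lborel)"
      by (rule nn_integral_sum) (use Shm in auto)
    also have "\<dots> = (\<Sum>k\<le>K0. ennreal (s k) * emeasure lborel (Sh k))"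
      by (intro sum.cong refl nn_integral_cmult_indicator Shm)
    also have "\<dots> \<le> (\<Sum>k\<le>K0. ennreal (s k * (\<omega> * real n * (real k + 1) ^ (n - 1))))"
    proof (rule sum_mono)
      fix k assume "k \<in> {..K0}"
      have e1: "emeasure lborel (ball (0::real^'n) (real k + 1)) = ennreal (\<omega> * (real k + 1) ^ n)"
        unfolding \<omega>_def n_def by (subst emeasure_ball) auto
      have e2: "emeasure lborel (ball (0::real^'n) (real k)) = ennreal (\<omega> * (real k) ^ n)"
        unfolding \<omega>_def n_def by (subst emeasure_ball) auto
      have "emeasure lborel (Sh k) = emeasure lborel (ball (0::real^'n) (real k + 1)) - emeasure lborel (ball (0::real^'n) (real k))"
        unfolding Sh_def by (rule emeasure_Diff) (auto simp: e2)
      also have "\<dots> = ennreal (\<omega> * (real k + 1) ^ n - \<omega> * (real k) ^ n)"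
        unfolding e1 e2 by (rule ennreal_minus) (use \<omega>0 in simp)
      also have "\<dots> \<le> ennreal (\<omega> * real n * (real k + 1) ^ (n - 1))"
      proof (rule ennreal_leI)
        have "(real k + 1) ^ n - (real k) ^ n \<le> real n * (real k + 1) ^ (n - 1) * ((real k + 1) - real k)"
          by (rule pow_diff_le) auto
        hence "\<omega> * ((real k + 1) ^ n - (real k) ^ n) \<le> \<omega> * (real n * (real k + 1) ^ (n - 1))"
          using \<omega>0 by (intro mult_left_mono) auto
        thus "\<omega> * (real k + 1) ^ n - \<omega> * (real k) ^ n \<le> \<omega> * real n * (real k + 1) ^ (n - 1)"
          by (simp add: algebra_simps)
      qed
      finally have "emeasure lborel (Sh k) \<le> ennreal (\<omega> * real n * (real k + 1) ^ (n - 1))" .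
      hence "ennreal (s k) * emeasure lborel (Sh k) \<le> ennreal (s k) * ennreal (\<omega> * real n * (real k + 1) ^ (n - 1))"
        by (rule mult_left_mono) simp
      also have "\<dots> = ennreal (s k * (\<omega> * real n * (real k + 1) ^ (n - 1)))"
        by (rule ennreal_mult[symmetric]) (use s0 \<omega>0 in auto)
      finally show "ennreal (s k) * emeasure lborel (Sh k) \<le> ennreal (s k * (\<omega> * real n * (real k + 1) ^ (n - 1)))" .
    qed
    also have "\<dots> = ennreal (\<Sum>k\<le>K0. s k * (\<omega> * real n * (real k + 1) ^ (n - 1)))"
      by (rule sum_ennreal) (use s0 \<omega>0 in auto)
    also have "\<dots> \<le> ennreal (Cst * (1 + R) powr (real CARD('n) - 1 - \<alpha>))"
    proof (rule ennreal_leI)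
      have "(\<Sum>k\<le>K0. s k * (\<omega> * real n * (real k + 1) ^ (n - 1)))
          \<le> (\<Sum>k\<le>K0. (C4 * \<omega> * real n * exp \<gamma>) * ((real k + 1) powr \<beta> * exp (- \<gamma> * (real K0 - real k))))"
      proof (rule sum_mono)
        fix k assume k: "k \<in> {..K0}"
        have p1: "(real k + 1) ^ (n - 1) = (real k + 1) powr (real n - 1)"
          using n1 by (simp add: powr_realpow[symmetric] of_nat_diff)
        have p2: "(real k + 1) powr (-\<alpha>) * (real k + 1) powr (real n - 1) = (real k + 1) powr \<beta>"
          by (simp add: \<beta>_def powr_add[symmetric])
        have RK: "real K0 \<le> R" unfolding K0_def using R by linarith
        have ex: "exp (-\<gamma> * (R - real k - 1)) \<le> exp \<gamma> * exp (- \<gamma> * (real K0 - real k))"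
        proof -
          have "-\<gamma> * (R - real k - 1) \<le> \<gamma> + (- \<gamma> * (real K0 - real k))"
            using g RK by (simp add: algebra_simps mult_left_mono)
          thus ?thesis by (simp add: exp_add[symmetric])
        qed
        have "s k * (\<omega> * real n * (real k + 1) ^ (n - 1))
            = (C4 * \<omega> * real n) * ((real k + 1) powr (-\<alpha>) * (real k + 1) powr (real n - 1)) * exp (-\<gamma> * (R - real k - 1))"
          unfolding s_def p1 by (simp add: algebra_simps)
        also have "\<dots> = (C4 * \<omega> * real n) * (real k + 1) powr \<beta> * exp (-\<gamma> * (R - real k - 1))"
          unfolding p2 ..
        also have "\<dots> \<le> (C4 * \<omega> * real n) * (real k + 1) powr \<beta> * (exp \<gamma> * exp (- \<gamma> * (real K0 - real k)))"
          by (intro mult_left_mono ex) (use C4 \<omega>0 in auto)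
        also have "\<dots> = (C4 * \<omega> * real n * exp \<gamma>) * ((real k + 1) powr \<beta> * exp (- \<gamma> * (real K0 - real k)))"
          by (simp add: algebra_simps)
        finally show "s k * (\<omega> * real n * (real k + 1) ^ (n - 1))
            \<le> (C4 * \<omega> * real n * exp \<gamma>) * ((real k + 1) powr \<beta> * exp (- \<gamma> * (real K0 - real k)))" .
      qed
      also have "\<dots> = (C4 * \<omega> * real n * exp \<gamma>) * (\<Sum>k\<le>K0. (real k + 1) powr \<beta> * exp (- \<gamma> * (real K0 - real k)))"
        by (simp add: sum_distrib_left)
      also have "\<dots> \<le> (C4 * \<omega> * real n * exp \<gamma>) * (S * (real K0 + 1) powr \<beta>)"
        by (intro mult_left_mono S) (use C4 \<omega>0 in auto)
      also have "\<dots> \<le> (C4 * \<omega> * real n * exp \<gamma>) * (S * (2 powr \<bar>\<beta>\<bar> * (1 + R) powr \<beta>))"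
        by (intro mult_left_mono K0_pow[OF R, unfolded K0_def[symmetric]]) (use C4 \<omega>0 S0 in auto)
      also have "\<dots> = Cst * (1 + R) powr (real CARD('n) - 1 - \<alpha>)"
        by (simp add: Cst_def \<beta>_def n_def)
      finally show "(\<Sum>k\<le>K0. s k * (\<omega> * real n * (real k + 1) ^ (n - 1))) \<le> Cst * (1 + R) powr (real CARD('n) - 1 - \<alpha>)" .
    qed
    finally show "(\<integral>\<^sup>+x. ennreal (f x) \<partial>lborel) \<le> ennreal (Cst * (1 + R) powr (real CARD('n) - 1 - \<alpha>))" .
  qed
qed


lemma jb_lower:
  fixes lam r :: real
  assumes lam: "lam > 0" and r: "r \<ge> 0"
  shows "min 1 lam / 2 * (1 + r) \<le> jb (lam * r)"
proof -
  have j1: "jb (lam * r) \<ge> 1" unfolding jb_def by simp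
  have j2: "jb (lam * r) \<ge> lam * r"
  proof -
    have "sqrt ((lam * r)^2) \<le> sqrt (1 + (lam * r)^2)" by (rule real_sqrt_le_mono) simp
    thus ?thesis unfolding jb_def using lam r by simp
  qed
  have "min 1 lam * (1 + r) = min 1 lam + min 1 lam * r" by (simp add: algebra_simps)
  also have "\<dots> \<le> 1 + lam * r"
    by (intro add_mono mult_right_mono) (use r in auto)
  also have "\<dots> \<le> 2 * jb (lam * r)" using j1 j2 by linarith
  finally show ?thesis by (simp add: field_simps)
qed

lemma pointwise_bound:
  fixes q lam c vt A Et P r Fr R R1 C2 vol V' N :: real
  assumes q: "q \<ge> 1" and lam: "lam > 0" and c: "c > 0"
    and vt0: "vt \<ge> 0" and vtA: "vt \<le> A * exp (- lam * Et)"
    and P0: "0 \<le> P" and Pb: "P \<le> c * jb (lam * r) powr (- (N - 1) / 2) * exp (lam * Fr)"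
    and r: "r \<ge> 0"
    and Fr: "2 * Fr \<le> 2 * Et + 2 * R1 + 2 * C2 + 1 - (R - r)"
    and vol: "vol \<le> V'" and V': "V' \<ge> 0" and N: "N \<ge> 1"
  shows "(vt * P) powr q * vol \<le>
     (A powr q * c powr q * (min 1 lam / 2) powr (- ((N - 1) / 2 * q)) * exp (q * lam * (R1 + C2 + 1 / 2)) * V')
     * (1 + r) powr (- ((N - 1) / 2 * q)) * exp (- (q * lam / 2) * (R - r))"
proof -
  define \<alpha> where "\<alpha> = (N - 1) / 2 * q"
  define \<mu> where "\<mu> = min 1 lam / 2"
  define J where "J = jb (lam * r)"
  have \<alpha>0: "\<alpha> \<ge> 0" unfolding \<alpha>_def using N q by simp
  have \<mu>0: "\<mu> > 0" unfolding \<mu>_def using lam by simp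
  have J: "\<mu> * (1 + r) \<le> J" unfolding \<mu>_def J_def by (rule jb_lower[OF lam r])
  have q0: "q \<ge> 0" using q by simp
  have A0: "A \<ge> 0"
  proof (rule ccontr)
    assume "\<not> A \<ge> 0"
    hence "A * exp (- lam * Et) < 0" by (simp add: mult_neg_pos)
    thus False using vt0 vtA by simp
  qed
  have "vt powr q \<le> (A * exp (- lam * Et)) powr q" by (rule powr_mono2[OF q0 vt0 vtA])
  also have "\<dots> = A powr q * exp (- (q * lam * Et))"
    by (simp add: powr_mult exp_powr_real algebra_simps)
  finally have v: "vt powr q \<le> A powr q * exp (- (q * lam * Et))" .
  have "P powr q \<le> (c * J powr (- (N - 1) / 2) * exp (lam * Fr)) powr q"
    by (rule powr_mono2[OF q0 P0]) (use Pb in \<open>simp add: J_def\<close>)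
  also have "\<dots> = c powr q * J powr (- \<alpha>) * exp (q * lam * Fr)"
  proof -
    have e: "- (N - 1) / 2 * q = - \<alpha>" by (simp add: \<alpha>_def field_simps)
    have "(c * J powr (- (N - 1) / 2) * exp (lam * Fr)) powr q
        = c powr q * (J powr (- (N - 1) / 2)) powr q * exp (lam * Fr) powr q"
      by (simp only: powr_mult)
    also have "(J powr (- (N - 1) / 2)) powr q = J powr (- \<alpha>)" by (simp only: powr_powr e)
    also have "exp (lam * Fr) powr q = exp (q * lam * Fr)" by (simp add: exp_powr_real algebra_simps)
    finally show ?thesis .
  qed
  finally have p: "P powr q \<le> c powr q * J powr (- \<alpha>) * exp (q * lam * Fr)" .
  have Jb: "J powr (- \<alpha>) \<le> \<mu> powr (- \<alpha>) * (1 + r) powr (- \<alpha>)"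
  proof -
    have "J powr (- \<alpha>) \<le> (\<mu> * (1 + r)) powr (- \<alpha>)"
      by (rule powr_mono2') (use \<alpha>0 \<mu>0 r J in auto)
    thus ?thesis by (simp add: powr_mult)
  qed
  have ex: "exp (q * lam * Fr) * exp (- (q * lam * Et)) \<le> exp (q * lam * (R1 + C2 + 1 / 2)) * exp (- (q * lam / 2) * (R - r))"
  proof -
    have "q * lam * (2 * Fr) \<le> q * lam * (2 * Et + 2 * R1 + 2 * C2 + 1 - (R - r))"
      by (rule mult_left_mono[OF Fr]) (use q lam in simp)
    moreover have "2 * (q * lam * Fr - q * lam * Et - (q * lam * (R1 + C2 + 1 / 2) - q * lam / 2 * (R - r)))
       = q * lam * (2 * Fr) - q * lam * (2 * Et + 2 * R1 + 2 * C2 + 1 - (R - r))"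
      by (simp add: field_simps)
    ultimately have "2 * (q * lam * Fr - q * lam * Et - (q * lam * (R1 + C2 + 1 / 2) - q * lam / 2 * (R - r))) \<le> 0"
      by linarith
    hence "q * lam * Fr - q * lam * Et - (q * lam * (R1 + C2 + 1 / 2) - q * lam / 2 * (R - r)) \<le> 0"
      by (simp only: mult_le_0_iff) simp
    hence "q * lam * Fr - q * lam * Et \<le> q * lam * (R1 + C2 + 1 / 2) - q * lam / 2 * (R - r)"
      by (simp only: diff_le_0_iff_le)
    hence "exp (q * lam * Fr - q * lam * Et) \<le> exp (q * lam * (R1 + C2 + 1 / 2) - q * lam / 2 * (R - r))"
      by (simp only: exp_le_cancel_iff)
    moreover have "exp (q * lam * Fr - q * lam * Et) = exp (q * lam * Fr) * exp (- (q * lam * Et))"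
      by (simp add: exp_add[symmetric])
    moreover have "exp (q * lam * (R1 + C2 + 1 / 2) - q * lam / 2 * (R - r)) = exp (q * lam * (R1 + C2 + 1 / 2)) * exp (- (q * lam / 2) * (R - r))"
      by (simp add: exp_add[symmetric])
    ultimately show ?thesis by simp
  qed
  have "(vt * P) powr q = vt powr q * P powr q" by (rule powr_mult)
  also have "\<dots> \<le> (A powr q * exp (- (q * lam * Et))) * (c powr q * (\<mu> powr (- \<alpha>) * (1 + r) powr (- \<alpha>)) * exp (q * lam * Fr))"
  proof (rule mult_mono[OF v])
    show "P powr q \<le> c powr q * (\<mu> powr (- \<alpha>) * (1 + r) powr (- \<alpha>)) * exp (q * lam * Fr)"
      using p Jb by (smt (verit) exp_gt_zero mult_left_mono mult_right_mono powr_ge_zero)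
  qed auto
  also have "\<dots> = (A powr q * c powr q * \<mu> powr (- \<alpha>)) * (1 + r) powr (- \<alpha>) * (exp (q * lam * Fr) * exp (- (q * lam * Et)))"
    by (simp add: algebra_simps)
  also have "\<dots> \<le> (A powr q * c powr q * \<mu> powr (- \<alpha>)) * (1 + r) powr (- \<alpha>) * (exp (q * lam * (R1 + C2 + 1 / 2)) * exp (- (q * lam / 2) * (R - r)))"
    by (intro mult_left_mono ex) auto
  finally have main: "(vt * P) powr q \<le> (A powr q * c powr q * \<mu> powr (- \<alpha>)) * (1 + r) powr (- \<alpha>) * (exp (q * lam * (R1 + C2 + 1 / 2)) * exp (- (q * lam / 2) * (R - r)))" .
  have "(vt * P) powr q * vol \<le> (vt * P) powr q * V'" by (rule mult_left_mono[OF vol]) simp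
  also have "\<dots> \<le> ((A powr q * c powr q * \<mu> powr (- \<alpha>)) * (1 + r) powr (- \<alpha>) * (exp (q * lam * (R1 + C2 + 1 / 2)) * exp (- (q * lam / 2) * (R - r)))) * V'"
    by (rule mult_right_mono[OF main V'])
  also have "\<dots> = (A powr q * c powr q * \<mu> powr (- \<alpha>) * exp (q * lam * (R1 + C2 + 1 / 2)) * V')
     * (1 + r) powr (- \<alpha>) * exp (- (q * lam / 2) * (R - r))"
    by (simp add: algebra_simps)
  finally show ?thesis by (simp add: \<alpha>_def \<mu>_def)
qed


lemma half_conv2: "(s - r) / 2 - C \<le> (X::real) \<Longrightarrow> s - r - 2 * C \<le> 2 * X"
  by (simp add: field_simps)

theorem lemma3p1:
  fixes g g2 :: "real^'n::finite \<Rightarrow> real^'n^'n"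
    and K K1 K2 :: "real \<Rightarrow> real"
    and \<rho> :: real
    and b :: "real \<Rightarrow> real"
    and lam c R1 :: real
    and \<phi> :: "real^'n \<Rightarrow> real"
    and vphi vphi1 :: "real \<Rightarrow> real"
  assumes dim: "CARD('n) \<ge> 2"
    (* asymptotically Euclidean manifold (R^n, g), g = g1 + g2 *)
    and metric: "riemannian_metric g"
    and decomp: "\<forall>x. x \<noteq> 0 \<longrightarrow> g x = polar_metric K x + g2 x"
    and rho_pos: "\<rho> > 0"
    and K_deriv: "\<forall>r\<ge>0. (K has_real_derivative K1 r) (at r within {0..})
                       \<and> (K1 has_real_derivative K2 r) (at r within {0..})"
    and K_bounds: "\<exists>C. \<forall>r\<ge>0. \<bar>K r - 1\<bar> \<le> C * jb r powr (-\<rho>)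
                              \<and> \<bar>K1 r\<bar> \<le> C * jb r powr (-1 - \<rho>)
                              \<and> \<bar>K2 r\<bar> \<le> C * jb r powr (-2 - \<rho>)"
    and g2_C2: "\<forall>j k. C2_Rn (\<lambda>x. g2 x $ j $ k)"
    and g2_bounds: "\<exists>C. \<forall>j k x. \<bar>g2 x $ j $ k\<bar> \<le> C * jb (norm x) powr (-\<rho> - 1)
                      \<and> (\<forall>i. \<bar>pd i (\<lambda>y. g2 y $ j $ k) x\<bar> \<le> C * jb (norm x) powr (-\<rho> - 2))
                      \<and> (\<forall>i l. \<bar>pd i (pd l (\<lambda>y. g2 y $ j $ k)) x\<bar> \<le> C * jb (norm x) powr (-\<rho> - 3))"
    (* b in L^1(R_+) *)
    and b_L1: "b absolutely_integrable_on {0..}"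
    (* hypothesis (H) *)
    and lam_pos: "lam > 0" and c_pos: "c > 0"
    and phi_C2: "C2_Rn \<phi>"
    and phi_eq: "\<forall>x. laplace_beltrami g \<phi> x = lam\<^sup>2 * \<phi> x"
    and phi_nontriv: "\<exists>x. \<phi> x \<noteq> 0"
    and phi_bounds: "\<forall>x. 0 \<le> \<phi> x \<and> \<phi> x \<le> c * jb (lam * norm x) powr (- (real CARD('n) - 1) / 2)
                                      * exp (lam * integral {0..norm x} K)"
    (* the time solution varphi with derivative varphi1 *)
    and vphi_ode: "\<forall>t\<ge>0. (vphi has_real_derivative vphi1 t) (at t within {0..})
                     \<and> (vphi1 has_real_derivative lam\<^sup>2 * (mtilde b t)\<^sup>2 * vphi t) (at t within {0..})"
    and vphi_asym: "\<exists>t0\<ge>0.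
          ((\<lambda>t. vphi t * exp (lam * integral {t0..t} (mtilde b))) \<longlongrightarrow> 1) at_top
        \<and> ((\<lambda>t. vphi1 t * exp (lam * integral {t0..t} (mtilde b))) \<longlongrightarrow> - lam * kconst b) at_top"
    and R1_pos: "R1 > 0"
  shows "\<forall>q\<ge>1. \<exists>C. \<forall>t\<ge>0.
           (\<integral>\<^sup>+ x. ennreal (indicator {x. integral {0..norm x} K \<le> etafun b t + R1} x
                   * (vphi t * \<phi> x) powr q * vol_density g x) \<partial>lborel)
           \<le> ennreal (C * (t + 1) powr (real CARD('n) - 1 - (real CARD('n) - 1) / 2 * q))"
proof (intro allI impI)
  fix q :: real assume q: "q \<ge> 1"
  note KF = K_facts[OF rho_pos K_deriv K_bounds]
  have Kc: "continuous_on {0..} K" by (rule KF(1))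
  obtain M where M1: "M \<ge> 1" and M: "\<And>r. r \<ge> 0 \<Longrightarrow> \<bar>K r\<bar> \<le> M" using KF(2) by blast
  obtain r0 where r00: "r0 \<ge> 0" and r0: "\<And>r. r \<ge> r0 \<Longrightarrow> K r \<ge> 1/2" using KF(3) by blast
  define F where "F r = integral {0..r} K" for r
  define C2 where "C2 = 2 * M * r0"
  have C20: "C2 \<ge> 0" unfolding C2_def using M1 r00 by simp
  have Fg: "s - r - 2 * C2 \<le> 2 * (F s - F r)" if "0 \<le> r" "r \<le> s" for r s
    unfolding C2_def F_def
    by (rule half_conv2, rule F_growth[OF Kc that M1 M r00 r0])
  have F0: "F 0 = 0" by (simp add: F_def)
  have Fup: "F r \<le> M * r" if "r \<ge> 0" for r
    unfolding F_def by (rule F_upper[OF Kc that M])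
  obtain A where vpos: "\<And>t. t \<ge> 0 \<Longrightarrow> vphi t \<ge> 0"
    and vA: "\<And>t. t \<ge> 0 \<Longrightarrow> vphi t \<le> A * exp (- lam * etafun b t)"
    using vphi_main[OF b_L1 lam_pos vphi_ode vphi_asym] by blast
  obtain V where V: "\<And>x. vol_density g x \<le> V"
    using vol_bound[OF decomp rho_pos M g2_bounds] by blast
  define V' where "V' = max V 0"
  have V'0: "V' \<ge> 0" and V': "\<And>x. vol_density g x \<le> V'" unfolding V'_def using V by (auto simp: le_max_iff_disj)
  define N where "N = real CARD('n)"
  have N1: "N \<ge> 1" unfolding N_def using dim by simp
  define \<alpha> where "\<alpha> = (N - 1) / 2 * q"
  define \<gamma> where "\<gamma> = q * lam / 2"
  define C4 where "C4 = A powr q * c powr q * (min 1 lam / 2) powr (- \<alpha>) * exp (q * lam * (R1 + C2 + 1 / 2)) * V'"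
  have \<alpha>0: "\<alpha> \<ge> 0" unfolding \<alpha>_def using N1 q by simp
  have \<gamma>0: "\<gamma> > 0" unfolding \<gamma>_def using q lam_pos by simp
  have C40: "C4 \<ge> 0" unfolding C4_def using V'0 by simp
  obtain Cst where Cst: "\<forall>(f :: real^'n \<Rightarrow> real) R. R \<ge> 0 \<longrightarrow> (\<forall>x. R < norm x \<longrightarrow> f x \<le> 0) \<longrightarrow>
     (\<forall>x. norm x \<le> R \<longrightarrow> f x \<le> C4 * (1 + norm x) powr (-\<alpha>) * exp (-\<gamma> * (R - norm x))) \<longrightarrow>
     (\<integral>\<^sup>+x. ennreal (f x) \<partial>lborel) \<le> ennreal (Cst * (1 + R) powr (real CARD('n) - 1 - \<alpha>))"
    using shell_integral[OF \<alpha>0 \<gamma>0 C40] by blast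
  define B where "B = Bb b"
  define Cu where "Cu = 1 + 2 * exp B + 2 * R1 + 2 * C2"
  define cl where "cl = min 1 (exp (- B) / M)"
  define \<beta> where "\<beta> = N - 1 - \<alpha>"
  have cl0: "cl > 0" unfolding cl_def using M1 by simp
  have Cu0: "Cu > 0" unfolding Cu_def using R1_pos C20 exp_gt_zero[of B] by linarith
  show "\<exists>C. \<forall>t\<ge>0.
           (\<integral>\<^sup>+ x. ennreal (indicator {x. integral {0..norm x} K \<le> etafun b t + R1} x
                   * (vphi t * \<phi> x) powr q * vol_density g x) \<partial>lborel)
           \<le> ennreal (C * (t + 1) powr (real CARD('n) - 1 - (real CARD('n) - 1) / 2 * q))"
  proof (intro exI[of _ "\<bar>Cst\<bar> * (Cu powr \<beta> + cl powr \<beta>)"] allI impI)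
    fix t :: real assume t: "t \<ge> 0"
    define Et where "Et = etafun b t"
    have Et0: "Et \<ge> 0" unfolding Et_def by (rule eta_props(1)[OF b_L1 t])
    have EtL: "exp (- B) * t \<le> Et" "Et \<le> exp B * t"
      unfolding Et_def B_def using eta_lin[OF b_L1 t] by auto
    define St where "St = {r. 0 \<le> r \<and> F r \<le> Et + R1}"
    have St0: "0 \<in> St" unfolding St_def using F0 Et0 R1_pos by simp
    have Stb: "r \<le> 2 * (Et + R1 + C2)" if "r \<in> St" for r
    proof -
      have r: "0 \<le> r" "F r \<le> Et + R1" using that by (auto simp: St_def)
      have "r - 0 - 2 * C2 \<le> 2 * (F r - F 0)" by (rule Fg) (use r in auto)
      thus ?thesis using r F0 by (smt (verit))
    qed
    have bdd: "bdd_above St" by (rule bdd_aboveI[of _ "2 * (Et + R1 + C2)"]) (rule Stb)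
    have Stne: "St \<noteq> {}" using St0 by auto
    define R where "R = Sup St"
    have R0: "R \<ge> 0" unfolding R_def by (rule cSup_upper[OF St0 bdd])
    have RU: "R \<le> 2 * (Et + R1 + C2)" unfolding R_def by (rule cSup_least[OF Stne]) (rule Stb)
    have inR: "r \<le> R" if "r \<in> St" for r unfolding R_def by (rule cSup_upper[OF that bdd])
    have rstar: "(Et + R1) / M \<in> St"
    proof -
      have nn: "(Et + R1) / M \<ge> 0" using Et0 R1_pos M1 by simp
      have "F ((Et + R1) / M) \<le> M * ((Et + R1) / M)" by (rule Fup[OF nn])
      also have "\<dots> = Et + R1" using M1 by simp
      finally show ?thesis unfolding St_def using nn by simp
    qed
    have RL: "(Et + R1) / M \<le> R" by (rule inR[OF rstar])
    have key: "2 * F r \<le> 2 * Et + 2 * R1 + 2 * C2 + 1 - (R - r)" if "r \<in> St" for r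
    proof -
      have r: "0 \<le> r" "F r \<le> Et + R1" using that by (auto simp: St_def)
      have "R - 1 < Sup St" unfolding R_def[symmetric] by simp
      then obtain r' where r': "r' \<in> St" "R - 1 < r'" using less_cSup_iff[OF Stne bdd] by blast
      have r'': "0 \<le> r'" "F r' \<le> Et + R1" using r'(1) by (auto simp: St_def)
      show ?thesis
      proof (cases "r \<le> r'")
        case True
        have "r' - r - 2 * C2 \<le> 2 * (F r' - F r)" by (rule Fg[OF r(1) True])
        thus ?thesis using r'' r'(2) by (smt (verit))
      next
        case False
        thus ?thesis using r r'(2) C20 by (smt (verit))
      qed
    qed
    define f where "f x = indicator {x. integral {0..norm x} K \<le> etafun b t + R1} x
                   * (vphi t * \<phi> x) powr q * vol_density g x" for x :: "real^'n"
    have f_out: "\<forall>x. R < norm x \<longrightarrow> f x \<le> 0"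
    proof (intro allI impI)
      fix x :: "real^'n" assume x: "R < norm x"
      have "norm x \<notin> St" using inR x by force
      hence "\<not> integral {0..norm x} K \<le> etafun b t + R1" unfolding St_def F_def Et_def by simp
      thus "f x \<le> 0" unfolding f_def by simp
    qed
    have f_in: "\<forall>x. norm x \<le> R \<longrightarrow> f x \<le> C4 * (1 + norm x) powr (-\<alpha>) * exp (-\<gamma> * (R - norm x))"
    proof (intro allI impI)
      fix x :: "real^'n" assume x: "norm x \<le> R"
      have rhs0: "0 \<le> C4 * (1 + norm x) powr (-\<alpha>) * exp (-\<gamma> * (R - norm x))" using C40 by simp
      show "f x \<le> C4 * (1 + norm x) powr (-\<alpha>) * exp (-\<gamma> * (R - norm x))"
      proof (cases "integral {0..norm x} K \<le> etafun b t + R1")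
        case False
        thus ?thesis unfolding f_def using rhs0 by simp
      next
        case True
        hence xS: "norm x \<in> St" unfolding St_def F_def Et_def by simp
        have "(vphi t * \<phi> x) powr q * vol_density g x \<le>
           (A powr q * c powr q * (min 1 lam / 2) powr (- ((N - 1) / 2 * q)) * exp (q * lam * (R1 + C2 + 1 / 2)) * V')
           * (1 + norm x) powr (- ((N - 1) / 2 * q)) * exp (- (q * lam / 2) * (R - norm x))"
        proof (rule pointwise_bound[OF q lam_pos c_pos])
          show "vphi t \<ge> 0" by (rule vpos[OF t])
          show "vphi t \<le> A * exp (- lam * Et)" unfolding Et_def by (rule vA[OF t])
          show "0 \<le> \<phi> x" using phi_bounds by simp
          show "\<phi> x \<le> c * jb (lam * norm x) powr (- (N - 1) / 2) * exp (lam * F (norm x))"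
            using phi_bounds unfolding N_def F_def by simp
          show "2 * F (norm x) \<le> 2 * Et + 2 * R1 + 2 * C2 + 1 - (R - norm x)" by (rule key[OF xS])
        qed (use V'0 V' N1 in auto)
        thus ?thesis unfolding f_def C4_def \<alpha>_def \<gamma>_def using True by simp
      qed
    qed
    have I: "(\<integral>\<^sup>+x. ennreal (f x) \<partial>lborel) \<le> ennreal (Cst * (1 + R) powr (real CARD('n) - 1 - \<alpha>))"
      using Cst R0 f_out f_in by blast
    have Rup: "1 + R \<le> Cu * (t + 1)"
    proof -
      have "1 + R \<le> 1 + 2 * Et + 2 * R1 + 2 * C2" using RU by (smt (verit))
      also have "\<dots> \<le> 1 + 2 * (exp B * t) + 2 * R1 + 2 * C2" using EtL(2) by (smt (verit))
      also have "\<dots> \<le> Cu * (t + 1)"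
      proof -
        have "2 * exp B * t \<le> Cu * t" by (rule mult_right_mono) (use t R1_pos C20 in \<open>auto simp: Cu_def\<close>)
        moreover have "Cu * (t + 1) = Cu * t + Cu" by (simp add: algebra_simps)
        moreover have "2 * exp B * t = 2 * (exp B * t)" by simp
        moreover have "1 + 2 * R1 + 2 * C2 \<le> Cu" unfolding Cu_def using exp_gt_zero[of B] by (smt (verit))
        ultimately show ?thesis by (smt (verit))
      qed
      finally show ?thesis .
    qed
    have Rlo: "cl * (t + 1) \<le> 1 + R"
    proof -
      have "exp (- B) * t / M \<le> Et / M" using EtL(1) M1 by (simp add: divide_right_mono)
      also have "\<dots> \<le> (Et + R1) / M" using R1_pos M1 by (simp add: divide_right_mono)
      also have "\<dots> \<le> R" by (rule RL)
      finally have a1: "exp (- B) / M * t \<le> R" by simp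
      have "cl * t \<le> exp (- B) / M * t" by (rule mult_right_mono) (use t in \<open>auto simp: cl_def\<close>)
      moreover have "cl \<le> 1" by (simp add: cl_def)
      ultimately show ?thesis using a1 by (simp add: algebra_simps)
    qed
    have pw: "(1 + R) powr \<beta> \<le> (Cu powr \<beta> + cl powr \<beta>) * (t + 1) powr \<beta>"
    proof (cases "\<beta> \<ge> 0")
      case True
      have "(1 + R) powr \<beta> \<le> (Cu * (t + 1)) powr \<beta>" by (rule powr_mono2[OF True _ Rup]) (use R0 in simp)
      also have "\<dots> = Cu powr \<beta> * (t + 1) powr \<beta>" by (rule powr_mult)
      also have "\<dots> \<le> (Cu powr \<beta> + cl powr \<beta>) * (t + 1) powr \<beta>" by (intro mult_right_mono) auto
      finally show ?thesis .
    next
      case False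
      have "(1 + R) powr \<beta> \<le> (cl * (t + 1)) powr \<beta>" by (rule powr_mono2'[OF _ _ Rlo]) (use False cl0 t in auto)
      also have "\<dots> = cl powr \<beta> * (t + 1) powr \<beta>" by (rule powr_mult)
      also have "\<dots> \<le> (Cu powr \<beta> + cl powr \<beta>) * (t + 1) powr \<beta>" by (intro mult_right_mono) auto
      finally show ?thesis .
    qed
    have "Cst * (1 + R) powr (real CARD('n) - 1 - \<alpha>) \<le> \<bar>Cst\<bar> * (1 + R) powr \<beta>"
      unfolding \<beta>_def N_def by (rule mult_right_mono) auto
    also have "\<dots> \<le> \<bar>Cst\<bar> * ((Cu powr \<beta> + cl powr \<beta>) * (t + 1) powr \<beta>)"
      by (rule mult_left_mono[OF pw]) simp
    also have "\<dots> = \<bar>Cst\<bar> * (Cu powr \<beta> + cl powr \<beta>) * (t + 1) powr (real CARD('n) - 1 - (real CARD('n) - 1) / 2 * q)"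
      by (simp add: \<beta>_def \<alpha>_def N_def)
    finally have fin: "Cst * (1 + R) powr (real CARD('n) - 1 - \<alpha>) \<le> \<bar>Cst\<bar> * (Cu powr \<beta> + cl powr \<beta>) * (t + 1) powr (real CARD('n) - 1 - (real CARD('n) - 1) / 2 * q)" .
    have "(\<integral>\<^sup>+x. ennreal (f x) \<partial>lborel) \<le> ennreal (\<bar>Cst\<bar> * (Cu powr \<beta> + cl powr \<beta>) * (t + 1) powr (real CARD('n) - 1 - (real CARD('n) - 1) / 2 * q))"
      using I ennreal_leI[OF fin] by (rule order_trans)
    thus "(\<integral>\<^sup>+ x. ennreal (indicator {x. integral {0..norm x} K \<le> etafun b t + R1} x
                   * (vphi t * \<phi> x) powr q * vol_density g x) \<partial>lborel)
           \<le> ennreal (\<bar>Cst\<bar> * (Cu powr \<beta> + cl powr \<beta>) * (t + 1) powr (real CARD('n) - 1 - (real CARD('n) - 1) / 2 * q))"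
      unfolding f_def .
  qed
qed

end
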